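(* For $|q|<1$, \begin{align*} \sum_{i,j,k\geq 0} \frac{q^{4i^2+\frac{3}{2}j^2+\frac{1}{2}k^2+4ij+ik-\frac{1}{2}j+\frac{1}{2}k}}{(q;q)_i(q;q)_j(q;q)_k} &=\frac{(-q;q)_\infty}{(q,q^4;q^5)_\infty}, \\ \sum_{i,j,k\geq 0} \frac{q^{4i^2+\frac{3}{2}j^2+\frac{1}{2}k^2+4ij+ik+2i+\frac{1}{2}j+\frac{1}{2}k}}{(q;q)_i(q;q)_j(q;q)_k} &=\frac{(-q;q)_\infty}{(q^2,q^3;q^5)_\infty}. \end{align*}
   Context: For $|q|<1$: $(a;q)_n=\prod_{k=0}^{n-1}(1-aq^k)$ ($(a;q)_0=1$), $(a;q)_\infty=\prod_{k\ge0}(1-aq^k)$, $(a_1,\dots,a_m;q)_\infty=\prod_\ell(a_\ell;q)_\infty$. Half-integer powers of $q$ use a fixed choice of $q^{1/2}$ (e.g. $0<q<1$). *)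

theory Defs
  imports "HOL-Analysis.Analysis"
begin

definition qpoch :: "complex \<Rightarrow> complex \<Rightarrow> nat \<Rightarrow> complex" where
  "qpoch a q n = (\<Prod>k<n. 1 - a * q ^ k)"

definition qpoch_inf :: "complex \<Rightarrow> complex \<Rightarrow> complex" where
  "qpoch_inf a q = (\<Prod>k. 1 - a * q ^ k)"

end

theory Submission
  imports Defs
begin

lemma qpoch_0 [simp]: "qpoch a q 0 = 1"
  by (simp add: qpoch_def)

lemma qpoch_Suc: "qpoch a q (Suc n) = qpoch a q n * (1 - a * q ^ n)"
  by (simp add: qpoch_def)

lemma qpoch_add: "qpoch a q (n + m) = qpoch a q n * qpoch (a * q ^ n) q m"
  by (induction m) (simp_all add: qpoch_Suc power_add mult_ac)

lemma qpoch_qq_Suc: "qpoch q q (Suc n) = qpoch q q n * (1 - q ^ Suc n)"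
  by (simp add: qpoch_Suc)

lemma qpoch_nz:
  assumes "norm a < 1" "norm q \<le> 1"
  shows "qpoch a q n \<noteq> 0"
proof -
  have "1 - a * q ^ k \<noteq> 0" for k
  proof
    assume "1 - a * q ^ k = 0"
    hence "a * q ^ k = 1" by simp
    hence "norm (a * q ^ k) = 1" by simp
    moreover have "norm (a * q ^ k) < 1"
    proof -
      have "norm (a * q ^ k) = norm a * norm q ^ k" by (simp add: norm_mult norm_power)
      also have "\<dots> \<le> norm a" using assms
        by (metis mult_left_le norm_ge_zero power_le_one)
      finally show ?thesis using assms by simp
    qed
    ultimately show False by simp
  qed
  thus ?thesis by (simp add: qpoch_def)
qed

lemma qpoch_qq_nz: "norm q < 1 \<Longrightarrow> qpoch q q n \<noteq> 0"
  by (rule qpoch_nz) auto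

definition rp :: "real \<Rightarrow> nat \<Rightarrow> real" where
  "rp r n = (\<Prod>k<n. 1 - r ^ Suc k)"

lemma rp_Suc: "rp r (Suc n) = rp r n * (1 - r ^ Suc n)"
  by (simp add: rp_def)

lemma pow_Suc_lt1: "0 \<le> r \<Longrightarrow> r < 1 \<Longrightarrow> (r::real) ^ Suc k < 1"
proof -
  assume r: "0 \<le> r" "r < 1"
  have "r ^ k \<le> 1" using r by (simp add: power_le_one)
  hence "r * r ^ k \<le> r" using r by (simp add: mult_left_le)
  thus ?thesis using r by simp
qed

lemma pow_Suc_le1: "0 \<le> r \<Longrightarrow> r < 1 \<Longrightarrow> (r::real) ^ Suc k \<le> 1"
  using pow_Suc_lt1[of r k] by simp

lemma rp_pos: "0 \<le> r \<Longrightarrow> r < 1 \<Longrightarrow> rp r n > 0"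
  unfolding rp_def
  by (intro prod_pos) (use pow_Suc_lt1 in force)

lemma norm_qpoch_ge: "norm q < 1 \<Longrightarrow> rp (norm q) n \<le> norm (qpoch q q n)"
proof -
  assume q: "norm q < 1"
  have "rp (norm q) n = (\<Prod>k<n. 1 - norm q ^ Suc k)" by (simp add: rp_def)
  also have "\<dots> \<le> (\<Prod>k<n. norm (1 - q * q ^ k))"
  proof (rule prod_mono, safe)
    fix k
    show "0 \<le> 1 - norm q ^ Suc k" using q pow_Suc_le1[of "norm q" k]
      by simp
    have "1 - norm (q * q ^ k) \<le> norm (1 - q * q ^ k)"
      by (metis norm_one norm_triangle_ineq2)
    thus "1 - norm q ^ Suc k \<le> norm (1 - q * q ^ k)"
      by (simp add: norm_mult norm_power)
  qed
  also have "\<dots> = norm (qpoch q q n)"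
    by (simp add: qpoch_def prod_norm)
  finally show ?thesis .
qed

section \<open>Gaussian polynomials\<close>

fun qbn :: "complex \<Rightarrow> nat \<Rightarrow> nat \<Rightarrow> complex" where
  "qbn q 0 k = (if k = 0 then 1 else 0)"
| "qbn q (Suc n) k = (if k = 0 then 1 else qbn q n (k - 1) + q ^ k * qbn q n k)"

lemma qbn_0 [simp]: "qbn q n 0 = 1"
  by (cases n) auto

lemma qbn_Suc_Suc: "qbn q (Suc n) (Suc k) = qbn q n k + q ^ Suc k * qbn q n (Suc k)"
  by simp

lemma qbn_gt: "n < k \<Longrightarrow> qbn q n k = 0"
  by (induction n arbitrary: k) auto

lemma qbn_closed:
  "k \<le> n \<Longrightarrow> qbn q n k * qpoch q q k * qpoch q q (n - k) = qpoch q q n"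
proof (induction n arbitrary: k)
  case 0
  then show ?case by simp
next
  case (Suc n)
  show ?case
  proof (cases k)
    case 0
    then show ?thesis by simp
  next
    case (Suc k')
    have kn: "k' \<le> n" using Suc.prems Suc by simp
    have IH1: "qbn q n k' * qpoch q q k' * qpoch q q (n - k') = qpoch q q n"
      using Suc.IH kn by simp
    have T1: "qbn q n k' * qpoch q q (Suc k') * qpoch q q (Suc n - Suc k')
              = qpoch q q n * (1 - q ^ Suc k')"
      using IH1 by (simp add: qpoch_qq_Suc mult_ac)
    have T2: "q ^ Suc k' * qbn q n (Suc k') * qpoch q q (Suc k') * qpoch q q (Suc n - Suc k')
              = qpoch q q n * (q ^ Suc k' - q ^ Suc n)"
    proof (cases "k' = n")
      case True
      then show ?thesis by (simp add: qbn_gt)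
    next
      case False
      hence kn': "Suc k' \<le> n" using kn by simp
      have IH2: "qbn q n (Suc k') * qpoch q q (Suc k') * qpoch q q (n - Suc k') = qpoch q q n"
        using Suc.IH kn' by simp
      have e: "Suc n - Suc k' = Suc (n - Suc k')" using kn' by simp
      have e2: "Suc (n - Suc k') = n - k'" using kn' by simp
      have "q ^ Suc k' * qbn q n (Suc k') * qpoch q q (Suc k') * qpoch q q (Suc n - Suc k')
            = q ^ Suc k' * (qbn q n (Suc k') * qpoch q q (Suc k') * qpoch q q (n - Suc k'))
              * (1 - q ^ (n - k'))"
      proof -
        have "qpoch q q (Suc n - Suc k') = qpoch q q (Suc (n - Suc k'))" using e by simp
        also have "\<dots> = qpoch q q (n - Suc k') * (1 - q ^ Suc (n - Suc k'))" by (rule qpoch_qq_Suc)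
        also have "\<dots> = qpoch q q (n - Suc k') * (1 - q ^ (n - k'))" by (simp only: e2)
        finally have "qpoch q q (Suc n - Suc k') = qpoch q q (n - Suc k') * (1 - q ^ (n - k'))" .
        thus ?thesis by (simp add: mult_ac)
      qed
      also have "\<dots> = qpoch q q n * (q ^ Suc k' * (1 - q ^ (n - k')))"
        using IH2 by simp
      also have "q ^ Suc k' * (1 - q ^ (n - k')) = q ^ Suc k' - q ^ Suc n"
      proof -
        have "Suc k' + (n - k') = Suc n" using kn by simp
        hence "q ^ Suc k' * q ^ (n - k') = q ^ Suc n" by (metis power_add)
        thus ?thesis by (simp add: right_diff_distrib)
      qed
      finally show ?thesis .
    qed
    have "qbn q (Suc n) k * qpoch q q k * qpoch q q (Suc n - k)
          = qbn q n k' * qpoch q q (Suc k') * qpoch q q (Suc n - Suc k')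
            + q ^ Suc k' * qbn q n (Suc k') * qpoch q q (Suc k') * qpoch q q (Suc n - Suc k')"
      using Suc by (simp add: algebra_simps)
    also have "\<dots> = qpoch q q n * (1 - q ^ Suc k') + qpoch q q n * (q ^ Suc k' - q ^ Suc n)"
      by (simp only: T1 T2)
    also have "\<dots> = qpoch q q n * (1 - q ^ Suc n)"
      by (simp add: algebra_simps)
    also have "\<dots> = qpoch q q (Suc n)" by (simp add: qpoch_qq_Suc)
    finally show ?thesis .
  qed
qed

lemma qbn_closed_div:
  assumes "norm q < 1" "k \<le> n"
  shows "qbn q n k = qpoch q q n / (qpoch q q k * qpoch q q (n - k))"
  using qbn_closed[OF assms(2), of q] qpoch_qq_nz[OF assms(1)]
  by (simp add: field_simps)

lemma qbn_sym:
  assumes "norm q < 1" "k \<le> n"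
  shows "qbn q n (n - k) = qbn q n k"
  using assms by (simp add: qbn_closed_div mult.commute)

lemma qbn_bound:
  assumes "norm q < 1"
  shows "norm (qbn q n k) \<le> 1 / rp (norm q) k"
proof (induction n arbitrary: k)
  case 0
  then show ?case using rp_pos[of "norm q" k] assms by (simp add: rp_def)
next
  case (Suc n)
  show ?case
  proof (cases k)
    case 0
    then show ?thesis by (simp add: rp_def)
  next
    case (Suc k')
    let ?r = "norm q"
    have pos: "rp ?r k' > 0" using rp_pos assms by simp
    have pos2: "1 - ?r ^ Suc k' > 0" using assms pow_Suc_lt1[of ?r k']
      by simp
    have "norm (qbn q (Suc n) k) \<le> norm (qbn q n k') + ?r ^ Suc k' * norm (qbn q n (Suc k'))"
      using Suc by (simp add: norm_mult norm_power norm_triangle_le)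
    also have "\<dots> \<le> 1 / rp ?r k' + ?r ^ Suc k' * (1 / rp ?r (Suc k'))"
      by (intro add_mono mult_left_mono Suc.IH) auto
    also have "\<dots> = 1 / rp ?r (Suc k')"
      using pos pos2 by (simp add: rp_Suc field_simps)
    finally show ?thesis using Suc by simp
  qed
qed

lemma convergent_prod_qpoch:
  assumes "norm q < 1"
  shows "convergent_prod (\<lambda>k. 1 - a * q ^ k :: complex)"
proof -
  have "summable (\<lambda>k. norm a * norm q ^ k)"
    using assms by (intro summable_mult summable_geometric) auto
  hence "summable (\<lambda>k. norm ((1 - a * q ^ k) - 1))"
    by (simp add: norm_mult norm_power)
  hence "abs_convergent_prod (\<lambda>k. 1 - a * q ^ k)"
    by (rule summable_imp_abs_convergent_prod)
  thus ?thesis by (rule abs_convergent_prod_imp_convergent_prod)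
qed

lemma qpoch_tendsto:
  assumes "norm q < 1"
  shows "(\<lambda>n. qpoch a q n) \<longlonglongrightarrow> qpoch_inf a q"
proof -
  have "(\<lambda>n. \<Prod>i\<le>n. 1 - a * q ^ i) \<longlonglongrightarrow> qpoch_inf a q"
    unfolding qpoch_inf_def by (rule convergent_prod_LIMSEQ[OF convergent_prod_qpoch[OF assms]])
  hence "(\<lambda>n. qpoch a q (Suc n)) \<longlonglongrightarrow> qpoch_inf a q"
    by (simp add: qpoch_def lessThan_Suc_atMost)
  thus ?thesis by (rule LIMSEQ_imp_Suc)
qed

lemma qpoch_inf_split:
  assumes "norm q < 1"
  shows "qpoch_inf a q = qpoch a q n * qpoch_inf (a * q ^ n) q"
proof -
  have "(\<lambda>m. qpoch a q (m + n)) \<longlonglongrightarrow> qpoch_inf a q"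
    by (rule LIMSEQ_ignore_initial_segment[OF qpoch_tendsto[OF assms]])
  moreover have "(\<lambda>m. qpoch a q (m + n)) \<longlonglongrightarrow> qpoch a q n * qpoch_inf (a * q ^ n) q"
    unfolding add.commute[of _ n] qpoch_add
    by (intro tendsto_mult tendsto_const qpoch_tendsto assms)
  ultimately show ?thesis by (rule LIMSEQ_unique)
qed

lemma qpoch_inf_nz:
  assumes "norm q < 1" "\<And>k. a * q ^ k \<noteq> 1"
  shows "qpoch_inf a q \<noteq> 0"
  unfolding qpoch_inf_def
  by (rule prodinf_nonzero[OF convergent_prod_qpoch[OF assms(1)]]) (use assms(2) in auto)

lemma qpoch_inf_nz':
  assumes "norm q < 1" "norm a < 1"
  shows "qpoch_inf a q \<noteq> 0"
proof (rule qpoch_inf_nz[OF assms(1)])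
  fix k
  have "norm (a * q ^ k) = norm a * norm q ^ k" by (simp add: norm_mult norm_power)
  also have "\<dots> \<le> norm a" using assms
    by (metis less_imp_le mult_left_le norm_ge_zero power_le_one)
  finally have "norm (a * q ^ k) < 1" using assms by simp
  thus "a * q ^ k \<noteq> 1" by auto
qed

lemma qpoch_inf_qq_nz: "norm q < 1 \<Longrightarrow> qpoch_inf q q \<noteq> 0"
  by (rule qpoch_inf_nz') auto

lemma qpoch_inf_zero:
  assumes "norm q < 1" "a * q ^ k = 1"
  shows "qpoch_inf a q = 0"
proof -
  have "qpoch a q (Suc k) = 0" using assms by (simp add: qpoch_Suc)
  thus ?thesis using qpoch_inf_split[OF assms(1), of a "Suc k"] by simp
qed

definition Lr :: "real \<Rightarrow> real" where
  "Lr r = prodinf (\<lambda>k. 1 - r ^ Suc k)"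

lemma Lr_facts:
  assumes "0 \<le> r" "r < 1"
  shows "0 < Lr r" "\<And>n. Lr r \<le> rp r n"
proof -
  have "summable (\<lambda>k. r * r ^ k)"
    using assms by (intro summable_mult summable_geometric) auto
  hence "summable (\<lambda>k. norm ((1 - r ^ Suc k) - 1))"
    using assms by simp
  hence "abs_convergent_prod (\<lambda>k. 1 - r ^ Suc k)"
    by (rule summable_imp_abs_convergent_prod)
  hence cp: "convergent_prod (\<lambda>k. 1 - r ^ Suc k)"
    by (rule abs_convergent_prod_imp_convergent_prod)
  show "0 < Lr r" unfolding Lr_def
    by (rule less_0_prodinf[OF cp]) (use pow_Suc_lt1 assms in auto)
  fix n
  show "Lr r \<le> rp r n" unfolding Lr_def rp_def
    by (rule prod_ge_prodinf) (use cp assms pow_Suc_le1 in \<open>auto simp: convergent_prod_has_prod\<close>)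
qed

lemma norm_inv_qpoch_le:
  assumes "norm q < 1"
  shows "norm (1 / qpoch q q n) \<le> 1 / Lr (norm q)"
proof -
  have "0 < Lr (norm q)" "Lr (norm q) \<le> rp (norm q) n" using Lr_facts[of "norm q"] assms by auto
  moreover have "rp (norm q) n \<le> norm (qpoch q q n)" by (rule norm_qpoch_ge[OF assms])
  ultimately show ?thesis
    by (simp add: norm_divide frac_le)
qed

lemma norm_qbn_le:
  assumes "norm q < 1"
  shows "norm (qbn q n k) \<le> 1 / Lr (norm q)"
proof -
  have "0 < Lr (norm q)" "Lr (norm q) \<le> rp (norm q) k" using Lr_facts[of "norm q"] assms by auto
  hence "1 / rp (norm q) k \<le> 1 / Lr (norm q)" by (simp add: frac_le)
  thus ?thesis using qbn_bound[OF assms, of n k] by linarith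
qed

lemma qpoch_tendsto_comp:
  assumes "norm q < 1" "filterlim f at_top sequentially"
  shows "(\<lambda>n. qpoch a q (f n)) \<longlonglongrightarrow> qpoch_inf a q"
  using filterlim_compose[OF qpoch_tendsto[OF assms(1)] assms(2)] by simp

lemma qbn_tendsto:
  assumes q: "norm q < 1"
    and a: "filterlim a at_top sequentially" and b: "filterlim (\<lambda>n. n - a n) at_top sequentially"
    and le: "eventually (\<lambda>n. a n \<le> n) sequentially"
  shows "(\<lambda>n. qbn q n (a n)) \<longlonglongrightarrow> 1 / qpoch_inf q q"
proof -
  have nz: "qpoch_inf q q \<noteq> 0" by (rule qpoch_inf_qq_nz[OF q])
  have "(\<lambda>n. qpoch q q n / (qpoch q q (a n) * qpoch q q (n - a n)))
         \<longlonglongrightarrow> qpoch_inf q q / (qpoch_inf q q * qpoch_inf q q)"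
    by (intro tendsto_divide tendsto_mult qpoch_tendsto qpoch_tendsto_comp q a b)
       (simp add: nz)
  moreover have "eventually (\<lambda>n. qpoch q q n / (qpoch q q (a n) * qpoch q q (n - a n))
                  = qbn q n (a n)) sequentially"
    using le by eventually_elim (simp add: qbn_closed_div[OF q])
  ultimately have "(\<lambda>n. qbn q n (a n)) \<longlonglongrightarrow> qpoch_inf q q / (qpoch_inf q q * qpoch_inf q q)"
    by (rule Lim_transform_eventually)
  thus ?thesis using nz by simp
qed

section \<open>Tannery's theorem for has_sum\<close>

lemma tannery_infsum:
  fixes f :: "nat \<Rightarrow> 'a \<Rightarrow> complex" and M :: "'a \<Rightarrow> real"
  assumes M: "M summable_on A"
    and bound: "\<And>n x. x \<in> A \<Longrightarrow> norm (f n x) \<le> M x"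
    and lim: "\<And>x. x \<in> A \<Longrightarrow> (\<lambda>n. f n x) \<longlonglongrightarrow> g x"
  shows "(\<lambda>n. infsum (f n) A) \<longlonglongrightarrow> infsum g A" and "g summable_on A"
proof -
  have M0: "x \<in> A \<Longrightarrow> 0 \<le> M x" for x using bound[of x 0] norm_ge_zero[of "f 0 x"] by linarith
  have gb: "norm (g x) \<le> M x" if x: "x \<in> A" for x
  proof (rule tendsto_upperbound)
    show "((\<lambda>n. norm (f n x)) \<longlongrightarrow> norm (g x)) sequentially"
      by (intro tendsto_norm lim x)
    show "\<forall>\<^sub>F n in sequentially. norm (f n x) \<le> M x" using bound x by simp
  qed simp
  have Mabs: "(\<lambda>x. norm (M x)) summable_on A" using M summable_on_iff_abs_summable_on_real by blast
  have fs: "f n summable_on A" for n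
  proof -
    have "(\<lambda>x. norm (f n x)) summable_on A"
      by (rule summable_on_comparison_test[OF M]) (use bound M0 in auto)
    thus ?thesis by (rule abs_summable_summable)
  qed
  have gs: "g summable_on A"
  proof -
    have "(\<lambda>x. norm (g x)) summable_on A"
      by (rule summable_on_comparison_test[OF M]) (use gb M0 in auto)
    thus ?thesis by (rule abs_summable_summable)
  qed
  show "g summable_on A" by (rule gs)
  show "(\<lambda>n. infsum (f n) A) \<longlonglongrightarrow> infsum g A"
  proof (rule LIMSEQ_I)
    fix \<epsilon> :: real assume e: "\<epsilon> > 0"
    obtain F where F: "finite F" "F \<subseteq> A" "dist (sum M F) (infsum M A) \<le> \<epsilon> / 4"
      using has_sum_finite_approximation[OF has_sum_infsum[OF M], of "\<epsilon>/4"] e by auto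
    have MAF: "M summable_on (A - F)" by (rule summable_on_subset_banach[OF M]) auto
    have splitM: "infsum M A = sum M F + infsum M (A - F)"
    proof -
      have "A = F \<union> (A - F)" using F by auto
      hence "infsum M A = infsum M (F \<union> (A - F))" by simp
      also have "\<dots> = infsum M F + infsum M (A - F)"
        by (rule infsum_Un_disjoint) (use F MAF in auto)
      finally show ?thesis using F by simp
    qed
    have tail: "infsum M (A - F) \<le> \<epsilon> / 4"
      using F(3) splitM by (simp add: dist_real_def)
    have split: "infsum h A = sum h F + infsum h (A - F)" if hs: "h summable_on A" for h :: "'a \<Rightarrow> complex"
    proof -
      have hs2: "h summable_on (A - F)" by (rule summable_on_subset_banach[OF hs]) auto
      have "A = F \<union> (A - F)" using F by auto
      hence "infsum h A = infsum h (F \<union> (A - F))" by simp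
      also have "\<dots> = infsum h F + infsum h (A - F)"
        by (rule infsum_Un_disjoint) (use F hs2 in auto)
      finally show ?thesis using F by simp
    qed
    have tailb: "norm (infsum h (A - F)) \<le> \<epsilon> / 4"
      if hs: "h summable_on A" and hb: "\<And>x. x \<in> A \<Longrightarrow> norm (h x) \<le> M x" for h :: "'a \<Rightarrow> complex"
    proof -
      have hs2: "h summable_on (A - F)" by (rule summable_on_subset_banach[OF hs]) auto
      have habs: "(\<lambda>x. norm (h x)) summable_on (A - F)"
        by (rule summable_on_comparison_test[OF MAF]) (use hb M0 in auto)
      have "norm (infsum h (A - F)) \<le> infsum (\<lambda>x. norm (h x)) (A - F)"
        by (rule norm_infsum_bound[OF habs])
      also have "\<dots> \<le> infsum M (A - F)"
        by (rule infsum_mono[OF habs MAF]) (use hb in auto)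
      finally show ?thesis using tail by simp
    qed
    have "(\<lambda>n. \<Sum>x\<in>F. f n x - g x) \<longlonglongrightarrow> (\<Sum>x\<in>F. g x - g x)"
      by (intro tendsto_sum tendsto_diff lim tendsto_const) (use F in auto)
    hence "(\<lambda>n. \<Sum>x\<in>F. f n x - g x) \<longlonglongrightarrow> 0" by simp
    then obtain N where N: "\<And>n. n \<ge> N \<Longrightarrow> norm (\<Sum>x\<in>F. f n x - g x) < \<epsilon> / 4"
      using LIMSEQ_D[of _ 0 "\<epsilon>/4"] e by fastforce
    show "\<exists>N. \<forall>n\<ge>N. norm (infsum (f n) A - infsum g A) < \<epsilon>"
    proof (intro exI allI impI)
      fix n assume n: "n \<ge> N"
      have eq: "infsum (f n) A - infsum g A
            = (\<Sum>x\<in>F. f n x - g x) + (infsum (f n) (A - F) - infsum g (A - F))"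
        using split[OF fs[of n]] split[OF gs] by (simp add: sum_subtractf)
      hence "norm (infsum (f n) A - infsum g A)
            = norm ((\<Sum>x\<in>F. f n x - g x) + (infsum (f n) (A - F) - infsum g (A - F)))"
        by (simp only:)
      moreover have "norm ((\<Sum>x\<in>F. f n x - g x) + (infsum (f n) (A - F) - infsum g (A - F)))
           \<le> norm (\<Sum>x\<in>F. f n x - g x) + norm (infsum (f n) (A - F) - infsum g (A - F))"
        by (rule norm_triangle_ineq)
      moreover have "norm (infsum (f n) (A - F) - infsum g (A - F))
           \<le> norm (infsum (f n) (A - F)) + norm (infsum g (A - F))"
        by (rule norm_triangle_ineq4)
      ultimately have "norm (infsum (f n) A - infsum g A)
             \<le> norm (\<Sum>x\<in>F. f n x - g x) + (norm (infsum (f n) (A - F)) + norm (infsum g (A - F)))"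
        by linarith
      also have "\<dots> < \<epsilon> / 4 + (\<epsilon> / 4 + \<epsilon> / 4)"
        using N[OF n] tailb[OF fs[of n] bound] tailb[OF gs gb] by linarith
      finally show "norm (infsum (f n) A - infsum g A) < \<epsilon>" using e by simp
    qed
  qed
qed

lemma prod_summable:
  fixes f :: "'a \<Rightarrow> complex" and g :: "'b \<Rightarrow> complex"
  assumes f: "(\<lambda>x. norm (f x)) summable_on A" and g: "(\<lambda>x. norm (g x)) summable_on B"
  shows "(\<lambda>(x, y). f x * g y) summable_on (A \<times> B)"
proof -
  let ?G = "infsum (\<lambda>y. norm (g y)) B"
  have "(\<lambda>(x, y). norm (f x) * norm (g y)) summable_on Sigma A (\<lambda>_. B)"
  proof (rule summable_on_SigmaI)
    show "((\<lambda>y. (\<lambda>(x, y). norm (f x) * norm (g y)) (x, y)) has_sum norm (f x) * ?G) B" for x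
      by (simp add: has_sum_cmult_right g)
    show "(\<lambda>x. norm (f x) * ?G) summable_on A"
      by (rule summable_on_cmult_left[OF f])
  qed auto
  hence "(\<lambda>z. norm ((\<lambda>(x, y). f x * g y) z)) summable_on (A \<times> B)"
    by (simp add: case_prod_unfold norm_mult)
  thus ?thesis using summable_on_iff_abs_summable_on_complex by blast
qed

lemma summable_on_nat_nonneg:
  fixes f :: "nat \<Rightarrow> real"
  assumes "summable f" "\<And>n. 0 \<le> f n"
  shows "f summable_on UNIV"
  using summable_on_UNIV_nonneg_real_iff assms by blast

lemma summable_on_int_split:
  fixes f :: "int \<Rightarrow> 'b::banach"
  assumes "(\<lambda>n. f (int n)) summable_on UNIV" "(\<lambda>n. f (- int n - 1)) summable_on UNIV"
  shows "f summable_on UNIV"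
proof -
  have U: "UNIV = range int \<union> range (\<lambda>n. - int n - 1)"
  proof (safe)
    fix x :: int assume "x \<notin> range (\<lambda>n. - int n - 1)"
    moreover have "x < 0 \<Longrightarrow> x = - int (nat (- x - 1)) - 1" by simp
    ultimately have "x \<ge> 0" by (metis not_le rangeI)
    hence "x = int (nat x)" by simp
    thus "x \<in> range int" by (rule image_eqI) simp
  qed auto
  have s1: "f summable_on range int"
    using assms(1) by (subst summable_on_reindex) (auto simp: o_def)
  have s2: "f summable_on range (\<lambda>n. - int n - 1)"
    using assms(2) by (subst summable_on_reindex) (auto simp: o_def inj_on_def)
  have "f summable_on (range int \<union> range (\<lambda>n. - int n - 1))"
    by (rule summable_on_Un_disjoint[OF s1 s2]) auto
  thus ?thesis using U by simp
qed

definition tri :: "nat \<Rightarrow> nat" where "tri k = k * (k - 1) div 2"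

lemma tri_0 [simp]: "tri 0 = 0" by (simp add: tri_def)

lemma tri_Suc: "tri (Suc k) = tri k + k"
proof -
  have "Suc k * k = k * (k - 1) + 2 * k" by (cases k) auto
  hence "Suc k * k div 2 = k * (k - 1) div 2 + k" by simp
  thus ?thesis by (simp add: tri_def)
qed

lemma summable_tri:
  fixes s u :: real
  assumes s: "0 \<le> s" "s < 1" and u: "0 \<le> u"
  shows "summable (\<lambda>k. s ^ tri k * u ^ k)"
proof -
  have "(\<lambda>n. s ^ n * u) \<longlonglongrightarrow> 0 * u"
    by (intro tendsto_mult LIMSEQ_power_zero tendsto_const) (use s in auto)
  hence "eventually (\<lambda>n. s ^ n * u < 1/2) sequentially"
    by (intro order_tendstoD) auto
  then obtain N where N: "\<And>n. n \<ge> N \<Longrightarrow> s ^ n * u < 1/2"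
    by (auto simp: eventually_sequentially)
  show ?thesis
  proof (rule summable_ratio_test[of "1/2" N])
    fix n assume n: "n \<ge> N"
    have "norm (s ^ tri (Suc n) * u ^ Suc n) = (s ^ n * u) * (s ^ tri n * u ^ n)"
      using s u by (simp add: tri_Suc power_add mult_ac)
    also have "\<dots> \<le> 1/2 * (s ^ tri n * u ^ n)"
      using N[OF n] s u by (intro mult_right_mono) auto
    finally show "norm (s ^ tri (Suc n) * u ^ Suc n) \<le> 1/2 * norm (s ^ tri n * u ^ n)"
      using s u by simp
  qed simp
qed

lemma powi_combine: "(q::complex) \<noteq> 0 \<Longrightarrow> x + y = z \<Longrightarrow> q powi x * q powi y = q powi z"
  by (metis power_int_add)

lemma qbn_diag [simp]: "qbn q n n = 1"
  by (induction n) (auto simp: qbn_gt)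

lemma qbn_PB:
  assumes q: "norm q < 1" and kn: "k \<le> n"
  shows "qbn q (Suc n) (Suc k) = qbn q n (Suc k) + q ^ (n - k) * qbn q n k"
proof (cases "k = n")
  case True
  then show ?thesis by (simp add: qbn_gt)
next
  case False
  hence kn': "k < n" using kn by simp
  have "qbn q (Suc n) (Suc k) = qbn q (Suc n) (Suc n - Suc k)"
    using qbn_sym[OF q, of "Suc k" "Suc n"] kn by simp
  also have "Suc n - Suc k = Suc (n - Suc k)" using kn' by simp
  also have "qbn q (Suc n) (Suc (n - Suc k)) = qbn q n (n - Suc k) + q ^ (n - k) * qbn q n (n - k)"
    using kn' by (simp add: Suc_diff_Suc)
  also have "qbn q n (n - Suc k) = qbn q n (Suc k)" using qbn_sym[OF q, of "Suc k" n] kn' by simp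
  also have "qbn q n (n - k) = qbn q n k" using qbn_sym[OF q, of k n] kn' by simp
  finally show ?thesis .
qed

lemma qbn_R:
  assumes q: "norm q < 1" and kn: "k < n"
  shows "(1 - q ^ Suc k) * qbn q n (Suc k) = (1 - q ^ (n - k)) * qbn q n k"
proof -
  have c1: "qbn q n (Suc k) * qpoch q q (Suc k) * qpoch q q (n - Suc k) = qpoch q q n"
    by (rule qbn_closed) (use kn in simp)
  have c2: "qbn q n k * qpoch q q k * qpoch q q (n - k) = qpoch q q n"
    by (rule qbn_closed) (use kn in simp)
  have e: "n - k = Suc (n - Suc k)" using kn by simp
  have "(qpoch q q k * qpoch q q (n - Suc k)) * ((1 - q ^ Suc k) * qbn q n (Suc k))
        = qbn q n (Suc k) * qpoch q q (Suc k) * qpoch q q (n - Suc k)"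
    by (simp only: qpoch_qq_Suc) (simp add: mult_ac)
  also have "\<dots> = qbn q n k * qpoch q q k * qpoch q q (n - k)" using c1 c2 by simp
  also have "\<dots> = (qpoch q q k * qpoch q q (n - Suc k)) * ((1 - q ^ (n - k)) * qbn q n k)"
    by (simp only: e qpoch_qq_Suc) (simp add: mult_ac)
  finally show ?thesis
    using qpoch_qq_nz[OF q] by (simp del: power_Suc)
qed

definition qb :: "complex \<Rightarrow> int \<Rightarrow> int \<Rightarrow> complex" where
  "qb q N K = (if 0 \<le> N \<and> 0 \<le> K then qbn q (nat N) (nat K) else 0)"

lemma qb_nat [simp]: "qb q (int n) (int k) = qbn q n k"
  by (simp add: qb_def)

lemma qb_negK [simp]: "K < 0 \<Longrightarrow> qb q N K = 0"
  by (simp add: qb_def)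

lemma qb_negN [simp]: "N < 0 \<Longrightarrow> qb q N K = 0"
  by (simp add: qb_def)

lemma qb_gtK: "N < K \<Longrightarrow> qb q N K = 0"
  by (auto simp: qb_def qbn_gt)

lemma qb_0K: "0 \<le> N \<Longrightarrow> qb q N 0 = 1"
  by (simp add: qb_def)

lemma qb_diag: "0 \<le> N \<Longrightarrow> qb q N N = 1"
  by (simp add: qb_def)

lemma qb_nz_range: "qb q N K \<noteq> 0 \<Longrightarrow> 0 \<le> K \<and> K \<le> N"
  by (cases "0 \<le> K"; cases "K \<le> N") (auto simp: qb_gtK)

lemma norm_qb_le: "norm q < 1 \<Longrightarrow> norm (qb q N K) \<le> 1 / Lr (norm q)"
  using norm_qbn_le[of q] Lr_facts[of "norm q"] by (auto simp: qb_def)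

lemma qb_PA:
  assumes N: "1 \<le> N"
  shows "qb q N K = qb q (N - 1) (K - 1) + q powi K * qb q (N - 1) K"
proof -
  define n where "n = nat (N - 1)"
  have n: "N = int (Suc n)" using N by (simp add: n_def)
  consider "K < 0" | "K = 0" | "0 < K" by linarith
  then show ?thesis
  proof cases
    case 1 then show ?thesis by simp
  next
    case 2 then show ?thesis using n by (simp add: qb_0K)
  next
    case 3
    define k where "k = nat (K - 1)"
    have k: "K = int (Suc k)" using 3 by (simp add: k_def)
    have "qb q N K = qbn q (Suc n) (Suc k)"
      by (simp only: n k qb_nat)
    also have "\<dots> = qbn q n k + q ^ Suc k * qbn q n (Suc k)" by simp
    also have "qbn q n k = qb q (N - 1) (K - 1)" using n k by simp
    also have "q ^ Suc k = q powi K" by (simp only: k power_int_of_nat)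
    also have "qbn q n (Suc k) = qb q (N - 1) K"
    proof -
      have "N - 1 = int n" using n by simp
      thus ?thesis by (simp only: k qb_nat)
    qed
    finally show ?thesis .
  qed
qed

lemma qb_PB:
  assumes q: "norm q < 1" and N: "1 \<le> N"
  shows "qb q N K = qb q (N - 1) K + q powi (N - K) * qb q (N - 1) (K - 1)"
proof -
  define n where "n = nat (N - 1)"
  have n: "N = int (Suc n)" using N by (simp add: n_def)
  consider "K < 0" | "K = 0" | "N < K" | k where "K = int (Suc k)" "k \<le> n"
  proof -
    assume a1: "K < 0 \<Longrightarrow> thesis" and a2: "K = 0 \<Longrightarrow> thesis" and a3: "N < K \<Longrightarrow> thesis"
      and a4: "\<And>k. K = int (Suc k) \<Longrightarrow> k \<le> n \<Longrightarrow> thesis"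
    show thesis
    proof (cases "K < 0 \<or> K = 0 \<or> N < K")
      case True then show ?thesis using a1 a2 a3 by blast
    next
      case False
      hence "K = int (Suc (nat (K - 1)))" "nat (K - 1) \<le> n" using n by auto
      thus ?thesis by (rule a4)
    qed
  qed
  then show ?thesis
  proof cases
    case 1 then show ?thesis by simp
  next
    case 2 then show ?thesis using n by (simp add: qb_0K)
  next
    case 3 then show ?thesis by (simp add: qb_gtK)
  next
    case 4
    have "qb q N K = qbn q (Suc n) (Suc k)"
      by (simp only: n 4(1) qb_nat)
    also have "\<dots> = qbn q n (Suc k) + q ^ (n - k) * qbn q n k" by (rule qbn_PB[OF q 4(2)])
    also have "qbn q n k = qb q (N - 1) (K - 1)" using n 4 by simp
    also have "q ^ (n - k) = q powi (N - K)"
    proof -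
      have "N - K = int (n - k)" using 4 n by simp
      thus ?thesis by simp
    qed
    also have "qbn q n (Suc k) = qb q (N - 1) K"
    proof -
      have "N - 1 = int n" using n by simp
      thus ?thesis by (simp only: 4(1) qb_nat)
    qed
    finally show ?thesis .
  qed
qed

lemma qb_R:
  assumes q: "norm q < 1"
  shows "(1 - q powi (K + 1)) * qb q N (K + 1) = (1 - q powi (N - K)) * qb q N K"
proof (cases "N < 0 \<or> K < -1")
  case True
  hence "qb q N (K + 1) = 0" "qb q N K = 0" by auto
  thus ?thesis by (simp only: mult_zero_right)
next
  case False
  hence N: "0 \<le> N" and K: "-1 \<le> K" by auto
  show ?thesis
  proof (cases "K = -1")
    case True
    hence "qb q N K = 0" "K + 1 = 0" by auto
    thus ?thesis by (simp only: power_int_0_right diff_self mult_zero_left mult_zero_right)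
  next
    case False
    hence K0: "0 \<le> K" using K by simp
    show ?thesis
    proof (cases "K < N")
      case True
      define n where "n = nat N"
      define k where "k = nat K"
      have nk: "N = int n" "K = int k" using N K0 by (simp_all add: n_def k_def)
      have kn: "k < n" using True nk by simp
      have "K + 1 = int (Suc k)" using nk by simp
      hence "(1 - q powi (K + 1)) * qb q N (K + 1) = (1 - q ^ Suc k) * qbn q n (Suc k)"
        using nk by (simp only: power_int_of_nat qb_nat)
      also have "\<dots> = (1 - q ^ (n - k)) * qbn q n k" by (rule qbn_R[OF q kn])
      also have "\<dots> = (1 - q powi (N - K)) * qb q N K"
      proof -
        have "N - K = int (n - k)" using nk kn by simp
        hence "q powi (N - K) = q ^ (n - k)" by (simp only: power_int_of_nat)
        moreover have "qb q N K = qbn q n k" by (simp only: nk qb_nat)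
        ultimately show ?thesis by (simp only:)
      qed
      finally show ?thesis .
    next
      case False
      hence NK: "N \<le> K" by simp
      have a: "qb q N (K + 1) = 0" using NK by (intro qb_gtK) simp
      show ?thesis
      proof (cases "N = K")
        case True
        thus ?thesis using a by (simp only: power_int_0_right diff_self mult_zero_left mult_zero_right)
      next
        case False
        hence "qb q N K = 0" using NK by (intro qb_gtK) simp
        thus ?thesis using a by (simp only: mult_zero_right)
      qed
    qed
  qed
qed

lemma qb_key:
  assumes q: "norm q < 1" "q \<noteq> 0" and m: "2 \<le> m"
  shows "qb q m a - qb q (m - 1) a - q powi (m - 1) * qb q (m - 2) (a - 1)
       = q powi (m - 2 * a + 2) * (qb q m (a - 2) - qb q (m - 1) (a - 3) - q powi (m - 1) * qb q (m - 2) (a - 3))"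
proof -
  define u where "u = q powi (m - a)"
  define v where "v = q powi (a - 2)"
  define X where "X = qb q (m - 2) (a - 2)"
  define Y1 where "Y1 = qb q (m - 2) (a - 1)"
  define Y3 where "Y3 = qb q (m - 2) (a - 3)"
  have v0: "v \<noteq> 0" using q by (simp add: v_def)
  have h1: "qb q m a = qb q (m - 1) a + u * qb q (m - 1) (a - 1)"
    using qb_PB[OF q(1), of m a] m by (simp add: u_def)
  have h2: "qb q (m - 1) (a - 1) = Y1 + u * X"
    using qb_PB[OF q(1), of "m - 1" "a - 1"] m by (simp add: u_def Y1_def X_def algebra_simps)
  have h3: "qb q m (a - 2) = qb q (m - 1) (a - 3) + v * qb q (m - 1) (a - 2)"
    using qb_PA[of m q "a - 2"] m by (simp add: v_def algebra_simps)
  have h4: "qb q (m - 1) (a - 2) = Y3 + v * X"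
    using qb_PA[of "m - 1" q "a - 2"] m by (simp add: v_def Y3_def X_def algebra_simps)
  have p1: "q powi (a - 1) = v * q"
    using powi_combine[OF q(2), of "a - 2" 1 "a - 1"] by (simp add: v_def)
  have p2: "q powi (m - a + 1) = u * q"
    using powi_combine[OF q(2), of "m - a" 1 "m - a + 1"] by (simp add: u_def)
  have p3: "q powi (m - 1) = u * (v * q)"
  proof -
    have "q powi (m - a) * q powi (a - 1) = q powi (m - 1)" by (rule powi_combine[OF q(2)]) simp
    thus ?thesis using p1 by (simp add: u_def)
  qed
  have p4: "q powi (m - 2 * a + 2) = u / v"
  proof -
    have "q powi (m - 2 * a + 2) * q powi (a - 2) = q powi (m - a)" by (rule powi_combine[OF q(2)]) simp
    thus ?thesis using v0 by (simp add: u_def v_def field_simps)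
  qed
  have h5: "(1 - v * q) * Y1 = (1 - u) * X"
    using qb_R[OF q(1), of "a - 2" "m - 2"] p1 by (simp add: Y1_def X_def u_def algebra_simps)
  have h6: "(1 - v) * X = (1 - u * q) * Y3"
  proof -
    have "(1 - q powi (a - 3 + 1)) * qb q (m - 2) (a - 3 + 1) = (1 - q powi (m - 2 - (a - 3))) * qb q (m - 2) (a - 3)"
      by (rule qb_R[OF q(1)])
    moreover have "a - 3 + 1 = a - 2" "m - 2 - (a - 3) = m - a + 1" by simp_all
    ultimately show ?thesis using p2 by (simp add: Y3_def X_def v_def)
  qed
  have L: "qb q m a - qb q (m - 1) a - q powi (m - 1) * Y1 = u * X"
  proof -
    have "qb q m a - qb q (m - 1) a - q powi (m - 1) * Y1 = u * ((1 - v * q) * Y1) + u * u * X"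
      using h1 h2 p3 by (simp add: algebra_simps)
    also have "\<dots> = u * ((1 - u) * X) + u * u * X" using h5 by simp
    also have "\<dots> = u * X" by (simp add: algebra_simps)
    finally show ?thesis .
  qed
  have R: "qb q m (a - 2) - qb q (m - 1) (a - 3) - q powi (m - 1) * Y3 = v * X"
  proof -
    have "qb q m (a - 2) - qb q (m - 1) (a - 3) - q powi (m - 1) * Y3 = v * ((1 - u * q) * Y3) + v * v * X"
      using h3 h4 p3 by (simp add: algebra_simps)
    also have "\<dots> = v * ((1 - v) * X) + v * v * X" using h6 by simp
    also have "\<dots> = v * X" by (simp add: algebra_simps)
    finally show ?thesis .
  qed
  show ?thesis
    unfolding Y1_def[symmetric] Y3_def[symmetric] L R p4 using v0 by simp
qed

section \<open>The Schur-type polynomials\<close>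

definition trii :: "int \<Rightarrow> int" where "trii k = k * (k - 1) div 2"

lemma trii_succ: "trii (k + 1) = trii k + k"
proof -
  have "(k + 1) * (k + 1 - 1) = k * (k - 1) + k * 2" by (simp add: algebra_simps)
  hence "(k + 1) * (k + 1 - 1) div 2 = k * (k - 1) div 2 + k" by simp
  thus ?thesis by (simp add: trii_def)
qed

lemma trii_minus: "trii (- k) = trii k + k"
proof -
  have "(- k) * (- k - 1) = k * (k - 1) + k * 2" by (simp add: algebra_simps)
  hence "(- k) * (- k - 1) div 2 = k * (k - 1) div 2 + k" by simp
  thus ?thesis by (simp add: trii_def)
qed

lemma trii_nat: "trii (int n) = int (tri n)"
proof (induction n)
  case 0 then show ?case by (simp add: trii_def)
next
  case (Suc n)
  have "trii (int (Suc n)) = trii (int n + 1)" by (simp add: add.commute)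
  also have "\<dots> = trii (int n) + int n" by (rule trii_succ)
  finally show ?case using Suc by (simp add: tri_Suc)
qed

lemma trii_neg: "trii (- int n - 1) = int (tri (n + 2))"
proof -
  have "trii (- int n - 1) = trii (- (int n + 1))" by (rule arg_cong[where f=trii]) simp
  also have "\<dots> = trii (int n + 1) + (int n + 1)" by (rule trii_minus)
  also have "\<dots> = trii (int n) + int n + int n + 1" by (simp add: trii_succ)
  also have "\<dots> = int (tri (n + 2))" by (simp add: trii_nat tri_Suc numeral_2_eq_2)
  finally show ?thesis .
qed

lemma trii_add: "trii (a + b) = trii a + trii b + a * b"
proof -
  have "(a + b) * (a + b - 1) = a * (a - 1) + b * (b - 1) + (a * b) * 2" by (simp add: algebra_simps)
  moreover have "2 dvd (a * (a - 1))" by simp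
  moreover have "2 dvd (b * (b - 1))" by simp
  ultimately have "(a + b) * (a + b - 1) div 2 = a * (a - 1) div 2 + b * (b - 1) div 2 + a * b"
    by (simp add: div_plus_div_distrib_dvd_left)
  thus ?thesis by (simp add: trii_def)
qed

definition cf :: "complex \<Rightarrow> int \<Rightarrow> int \<Rightarrow> complex" where
  "cf q b l = (-1) powi l * q powi (5 * trii l + (3 - b) * l)"

lemma cf_succ:
  assumes "q \<noteq> 0"
  shows "cf q b (l + 1) = - (q powi (5 * l + 3 - b) * cf q b l)"
proof -
  have "(-1 :: complex) powi (l + 1) = - ((-1) powi l)"
    by (simp add: power_int_add_1)
  moreover have "q powi (5 * trii (l + 1) + (3 - b) * (l + 1))
                 = q powi (5 * l + 3 - b) * q powi (5 * trii l + (3 - b) * l)"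
    by (rule sym, rule powi_combine[OF assms]) (simp only: trii_succ, simp add: algebra_simps)
  ultimately show ?thesis by (simp add: cf_def)
qed

definition Fb :: "complex \<Rightarrow> int \<Rightarrow> int \<Rightarrow> complex" where
  "Fb q b m = infsum (\<lambda>l. cf q b l * qb q m ((m + b - 5 * l) div 2)) UNIV"

lemma div2_facts: "2 * (x div 2) \<le> (x::int)" "x \<le> 2 * (x div 2) + 1"
proof -
  have "x = 2 * (x div 2) + x mod 2" by simp
  moreover have "0 \<le> x mod 2" "x mod 2 < 2" by simp_all
  ultimately show "2 * (x div 2) \<le> (x::int)" "x \<le> 2 * (x div 2) + 1" by linarith+
qed

lemma Fb_supp:
  assumes "qb q m ((m + b - 5 * l) div 2) \<noteq> 0"
  shows "l \<in> {- (\<bar>m\<bar> + \<bar>b\<bar> + 1) .. \<bar>m\<bar> + \<bar>b\<bar> + 1}"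
proof -
  have r: "0 \<le> (m + b - 5 * l) div 2" "(m + b - 5 * l) div 2 \<le> m"
    using qb_nz_range[OF assms] by auto
  have "2 * ((m + b - 5 * l) div 2) \<le> m + b - 5 * l" "m + b - 5 * l \<le> 2 * ((m + b - 5 * l) div 2) + 1"
    by (rule div2_facts)+
  with r show ?thesis by auto
qed

lemma summable_fin_supp:
  fixes g :: "int \<Rightarrow> complex"
  assumes "\<And>l. g l \<noteq> 0 \<Longrightarrow> l \<in> S" "finite S"
  shows "g summable_on UNIV"
proof (rule finite_nonzero_values_imp_summable_on)
  show "finite {x \<in> UNIV. g x \<noteq> 0}"
    by (rule finite_subset[OF _ assms(2)]) (use assms(1) in auto)
qed

lemma Fb_term_summable:
  "(\<lambda>l. c l * qb q m ((m + b - 5 * l) div 2)) summable_on UNIV"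
  by (rule summable_fin_supp[of _ "{- (\<bar>m\<bar> + \<bar>b\<bar> + 1) .. \<bar>m\<bar> + \<bar>b\<bar> + 1}"])
     (use Fb_supp in auto)

lemma infsum_single_int:
  fixes f :: "int \<Rightarrow> complex"
  assumes "\<And>x. x \<noteq> a \<Longrightarrow> f x = 0"
  shows "infsum f UNIV = f a"
proof -
  have "(f has_sum f a) UNIV"
    by (rule has_sum_finite_neutralI[of "{a}"]) (use assms in auto)
  thus ?thesis by (rule infsumI)
qed

lemma Fb_rec:
  assumes q: "norm q < 1" "q \<noteq> 0" and m: "2 \<le> m"
  shows "Fb q b m = Fb q b (m - 1) + q powi (m - 1) * Fb q b (m - 2)"
proof -
  define T where "T = (\<lambda>j l. cf q b l * qb q (m - j) ((m - j + b - 5 * l) div 2))"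
  have Ts: "T j summable_on UNIV" for j
    unfolding T_def by (rule Fb_term_summable)
  have FT: "Fb q b (m - j) = infsum (T j) UNIV" for j
    by (simp add: Fb_def T_def)
  define t where "t = (\<lambda>l. T 0 l + ((- 1) * T 1 l + (- (q powi (m - 1))) * T 2 l))"
  have ts: "t summable_on UNIV"
    unfolding t_def
    by (intro summable_on_add summable_on_cmult_right Ts)
  have tsum: "infsum t UNIV = Fb q b m - Fb q b (m - 1) - q powi (m - 1) * Fb q b (m - 2)"
  proof -
    have "infsum t UNIV = infsum (T 0) UNIV + infsum (\<lambda>l. (- 1) * T 1 l + (- (q powi (m - 1))) * T 2 l) UNIV"
      unfolding t_def by (intro infsum_add summable_on_add summable_on_cmult_right Ts)
    also have "infsum (\<lambda>l. (- 1) * T 1 l + (- (q powi (m - 1))) * T 2 l) UNIV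
             = infsum (\<lambda>l. (- 1) * T 1 l) UNIV + infsum (\<lambda>l. (- (q powi (m - 1))) * T 2 l) UNIV"
      by (intro infsum_add summable_on_cmult_right Ts)
    also have "infsum (\<lambda>l. (- 1) * T 1 l) UNIV = (- 1) * infsum (T 1) UNIV"
      by (intro infsum_cmult_right Ts)
    also have "infsum (\<lambda>l. (- (q powi (m - 1))) * T 2 l) UNIV = (- (q powi (m - 1))) * infsum (T 2) UNIV"
      by (intro infsum_cmult_right Ts)
    finally show ?thesis using FT[of 0] FT[of 1] FT[of 2] by simp
  qed
  define Od where "Od = {l. odd (m + b - 5 * l)}"
  have pair: "t l + t (l + 1) = 0" if l: "l \<in> Od" for l
  proof -
    define a where "a = (m + b - 5 * l) div 2"
    have odd: "m + b - 5 * l = 2 * a + 1"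
      using l unfolding Od_def a_def by (simp add: odd_two_times_div_two_succ)
    have d0: "(m - 0 + b - 5 * l) div 2 = a" by (simp add: a_def)
    have d1: "(m - 1 + b - 5 * l) div 2 = a"
    proof -
      have "m - 1 + b - 5 * l = 2 * a" using odd by simp
      thus ?thesis by simp
    qed
    have d2: "(m - 2 + b - 5 * l) div 2 = a - 1"
    proof -
      have "m - 2 + b - 5 * l = 2 * (a - 1) + 1" using odd by simp
      thus ?thesis by presburger
    qed
    have e0: "(m - 0 + b - 5 * (l + 1)) div 2 = a - 2"
    proof -
      have "m - 0 + b - 5 * (l + 1) = 2 * (a - 2)" using odd by simp
      thus ?thesis by simp
    qed
    have e1: "(m - 1 + b - 5 * (l + 1)) div 2 = a - 3"
    proof -
      have "m - 1 + b - 5 * (l + 1) = 2 * (a - 3) + 1" using odd by simp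
      thus ?thesis by presburger
    qed
    have e2: "(m - 2 + b - 5 * (l + 1)) div 2 = a - 3"
    proof -
      have "m - 2 + b - 5 * (l + 1) = 2 * (a - 3)" using odd by simp
      thus ?thesis by simp
    qed
    define K2 where "K2 = qb q m (a - 2) - qb q (m - 1) (a - 3) - q powi (m - 1) * qb q (m - 2) (a - 3)"
    have tl: "t l = cf q b l * (q powi (m - 2 * a + 2) * K2)"
    proof -
      have "t l = cf q b l * (qb q m a - qb q (m - 1) a - q powi (m - 1) * qb q (m - 2) (a - 1))"
        unfolding t_def T_def d0 d1 d2 by (simp add: algebra_simps)
      also have "\<dots> = cf q b l * (q powi (m - 2 * a + 2) * K2)"
        unfolding K2_def by (subst qb_key[OF q m]) simp
      finally show ?thesis .
    qed
    have tl1: "t (l + 1) = cf q b (l + 1) * K2"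
      unfolding t_def T_def e0 e1 e2 K2_def by (simp add: algebra_simps)
    have ex: "5 * l + 3 - b = m - 2 * a + 2" using odd by simp
    show ?thesis unfolding tl tl1 cf_succ[OF q(2)] ex by simp
  qed
  have shift: "UNIV - Od = (\<lambda>l. l + 1) ` Od"
  proof (safe)
    fix x assume "x \<notin> Od"
    hence "x - 1 \<in> Od" unfolding Od_def
    proof -
      assume "x \<notin> {l. odd (m + b - 5 * l)}"
      hence "even (m + b - 5 * x)" by simp
      moreover have "m + b - 5 * (x - 1) = (m + b - 5 * x) + 5" by simp
      ultimately have "odd (m + b - 5 * (x - 1))" by presburger
      thus "x - 1 \<in> {l. odd (m + b - 5 * l)}" by simp
    qed
    thus "x \<in> (\<lambda>l. l + 1) ` Od" by (rule image_eqI[rotated]) simp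
  next
    fix x assume "x \<in> Od" "x + 1 \<in> Od"
    hence "odd (m + b - 5 * x)" "odd (m + b - 5 * (x + 1))" unfolding Od_def by auto
    moreover have "m + b - 5 * (x + 1) = (m + b - 5 * x) - 5" by simp
    ultimately show False by presburger
  qed simp
  have tOd: "t summable_on Od" by (rule summable_on_subset_banach[OF ts]) auto
  have tOd': "t summable_on (UNIV - Od)" by (rule summable_on_subset_banach[OF ts]) auto
  have tOd1: "(\<lambda>l. t (l + 1)) summable_on Od"
  proof -
    have "t summable_on ((\<lambda>l. l + 1) ` Od)" using tOd' shift by simp
    thus ?thesis by (subst (asm) summable_on_reindex) (auto simp: o_def)
  qed
  have "infsum t UNIV = infsum t (Od \<union> (UNIV - Od))" by simp
  also have "\<dots> = infsum t Od + infsum t (UNIV - Od)"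
    by (rule infsum_Un_disjoint[OF tOd tOd']) auto
  also have "infsum t (UNIV - Od) = infsum (\<lambda>l. t (l + 1)) Od"
    unfolding shift by (subst infsum_reindex) (auto simp: o_def)
  also have "infsum t Od + infsum (\<lambda>l. t (l + 1)) Od = infsum (\<lambda>l. t l + t (l + 1)) Od"
    by (rule infsum_add[symmetric, OF tOd tOd1])
  also have "\<dots> = infsum (\<lambda>_. 0) Od"
    by (rule infsum_cong) (use pair in auto)
  finally have "infsum t UNIV = 0" by simp
  thus ?thesis using tsum by (simp add: algebra_simps)
qed

lemma Fb_single:
  assumes "\<And>l. l \<noteq> 0 \<Longrightarrow> qb q m ((m + b - 5 * l) div 2) = 0"
  shows "Fb q b m = qb q m ((m + b) div 2)"
proof -
  have "Fb q b m = cf q b 0 * qb q m ((m + b - 5 * 0) div 2)"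
    unfolding Fb_def by (rule infsum_single_int) (use assms in auto)
  thus ?thesis by (simp add: cf_def trii_def)
qed

lemma qb_zero_if: "\<not> (0 \<le> (m + b - 5 * l) div 2 \<and> (m + b - 5 * l) div 2 \<le> m) \<Longrightarrow> qb q m ((m + b - 5 * l) div 2) = 0"
  using qb_nz_range by blast

lemma Fb_init:
  "Fb q 0 0 = 1" "Fb q 0 1 = 1" "Fb q 2 1 = 1" "Fb q 2 2 = 1"
proof -
  show "Fb q 0 0 = 1"
  proof (subst Fb_single)
    fix l :: int assume "l \<noteq> 0"
    thus "qb q 0 ((0 + 0 - 5 * l) div 2) = 0" by (intro qb_zero_if) presburger
  qed (simp add: qb_diag)
  show "Fb q 0 1 = 1"
  proof (subst Fb_single)
    fix l :: int assume "l \<noteq> 0"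
    thus "qb q 1 ((1 + 0 - 5 * l) div 2) = 0" by (intro qb_zero_if) presburger
  qed (simp add: qb_0K)
  show "Fb q 2 1 = 1"
  proof (subst Fb_single)
    fix l :: int assume "l \<noteq> 0"
    thus "qb q 1 ((1 + 2 - 5 * l) div 2) = 0" by (intro qb_zero_if) presburger
  qed (simp add: qb_diag)
  show "Fb q 2 2 = 1"
  proof (subst Fb_single)
    fix l :: int assume "l \<noteq> 0"
    thus "qb q 2 ((2 + 2 - 5 * l) div 2) = 0" by (intro qb_zero_if) presburger
  qed (simp add: qb_diag)
qed

definition Sg :: "complex \<Rightarrow> complex \<Rightarrow> nat \<Rightarrow> complex" where
  "Sg q c n = (\<Sum>j\<le>n. q ^ (j^2) * c ^ j * qb q (int n - int j) (int j))"

lemma pow_powi_combine: "(q::complex) \<noteq> 0 \<Longrightarrow> q ^ a * q powi b = q powi (int a + b)"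
  by (metis power_int_add power_int_of_nat)

lemma Sg_rec:
  assumes q: "norm q < 1" "q \<noteq> 0"
  shows "Sg q c (Suc (Suc n)) = Sg q c (Suc n) + c * q ^ Suc n * Sg q c n"
proof -
  define N where "N = Suc (Suc n)"
  have split: "qb q (int N - int j) (int j) = qb q (int N - int j - 1) (int j)
        + q powi (int N - 2 * int j) * qb q (int N - int j - 1) (int j - 1)" if j: "j \<le> N" for j
  proof (cases "j = N")
    case True
    have "qb q (int N - int j) (int j) = 0" using True by (intro qb_gtK) (simp add: N_def)
    moreover have "int N - int j - 1 < 0" using True by simp
    ultimately show ?thesis by simp
  next
    case False
    have "qb q (int N - int j) (int j) = qb q (int N - int j - 1) (int j)
          + q powi (int N - int j - int j) * qb q (int N - int j - 1) (int j - 1)"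
      by (rule qb_PB[OF q(1)]) (use j False in simp)
    moreover have "int N - int j - int j = int N - 2 * int j" by simp
    ultimately show ?thesis by simp
  qed
  define g1 where "g1 = (\<lambda>j. q ^ (j^2) * c ^ j * qb q (int N - int j - 1) (int j))"
  define g2 where "g2 = (\<lambda>j. q ^ (j^2) * c ^ j * (q powi (int N - 2 * int j) * qb q (int N - int j - 1) (int j - 1)))"
  have "Sg q c N = (\<Sum>j\<le>N. g1 j + g2 j)"
    unfolding Sg_def g1_def g2_def by (rule sum.cong) (auto simp: split algebra_simps)
  also have "\<dots> = (\<Sum>j\<le>N. g1 j) + (\<Sum>j\<le>N. g2 j)" by (rule sum.distrib)
  also have "(\<Sum>j\<le>N. g1 j) = Sg q c (Suc n)"
  proof -
    have "(\<Sum>j\<le>N. g1 j) = (\<Sum>j\<le>Suc n. g1 j) + g1 N" by (simp add: N_def)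
    also have "g1 N = 0" by (simp add: g1_def)
    also have "(\<Sum>j\<le>Suc n. g1 j) = Sg q c (Suc n)"
      unfolding Sg_def g1_def
    proof (rule sum.cong)
      fix x assume "x \<in> {..Suc n}"
      have "int N - int x - 1 = int (Suc n) - int x" by (simp add: N_def)
      thus "q ^ x\<^sup>2 * c ^ x * qb q (int N - int x - 1) (int x) = q ^ x\<^sup>2 * c ^ x * qb q (int (Suc n) - int x) (int x)"
        by (simp only:)
    qed simp
    finally show ?thesis by simp
  qed
  also have "(\<Sum>j\<le>N. g2 j) = c * q ^ Suc n * Sg q c n"
  proof -
    have "(\<Sum>j\<le>N. g2 j) = g2 0 + (\<Sum>i\<le>Suc n. g2 (Suc i))"
      unfolding N_def by (rule sum.atMost_Suc_shift)
    also have "g2 0 = 0" by (simp add: g2_def)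
    also have "(\<Sum>i\<le>Suc n. g2 (Suc i)) = (\<Sum>i\<le>Suc n. c * q ^ Suc n * (q ^ (i^2) * c ^ i * qb q (int n - int i) (int i)))"
    proof (rule sum.cong)
      fix i assume "i \<in> {..Suc n}"
      have e1: "int N - int (Suc i) - 1 = int n - int i" "int (Suc i) - 1 = int i" by (simp_all add: N_def)
      have e2: "q ^ (Suc i)^2 * q powi (int N - 2 * int (Suc i)) = q ^ Suc n * q ^ (i^2)"
      proof -
        have "q ^ (Suc i)^2 * q powi (int N - 2 * int (Suc i)) = q powi (int ((Suc i)^2) + (int N - 2 * int (Suc i)))"
          by (rule pow_powi_combine[OF q(2)])
        also have "int ((Suc i)^2) + (int N - 2 * int (Suc i)) = int (Suc n + i^2)"
          by (simp add: N_def power2_eq_square algebra_simps)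
        also have "q powi int (Suc n + i^2) = q ^ Suc n * q ^ (i^2)" by (simp only: power_int_of_nat power_add)
        finally show ?thesis .
      qed
      show "g2 (Suc i) = c * q ^ Suc n * (q ^ (i^2) * c ^ i * qb q (int n - int i) (int i))"
        unfolding g2_def e1
        using e2 by (simp add: algebra_simps)
    qed simp
    also have "\<dots> = c * q ^ Suc n * (\<Sum>i\<le>Suc n. q ^ (i^2) * c ^ i * qb q (int n - int i) (int i))"
      by (simp add: sum_distrib_left)
    also have "(\<Sum>i\<le>Suc n. q ^ (i^2) * c ^ i * qb q (int n - int i) (int i)) = Sg q c n"
      by (simp add: Sg_def)
    finally show ?thesis by simp
  qed
  finally show ?thesis by (simp add: N_def)
qed

lemma Sg_0: "Sg q c 0 = 1"
  by (simp add: Sg_def qb_diag)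

lemma Sg_1: "Sg q c (Suc 0) = 1"
  by (simp add: Sg_def qb_0K qb_gtK)

lemma Sg_Fb:
  assumes q: "norm q < 1" "q \<noteq> 0"
  shows "Sg q 1 n = Fb q 0 (int n)" "Sg q q n = Fb q 2 (int n + 1)"
proof -
  have "Sg q 1 n = Fb q 0 (int n) \<and> Sg q 1 (Suc n) = Fb q 0 (int (Suc n))"
  proof (induction n)
    case 0 then show ?case by (simp add: Sg_0 Sg_1 Fb_init)
  next
    case (Suc n)
    have "Sg q 1 (Suc (Suc n)) = Fb q 0 (int (Suc n)) + q ^ Suc n * Fb q 0 (int n)"
      using Sg_rec[OF q, of 1 n] Suc by simp
    also have "\<dots> = Fb q 0 (int (Suc (Suc n)))"
    proof -
      have "Fb q 0 (int n + 2) = Fb q 0 (int n + 2 - 1) + q powi (int n + 2 - 1) * Fb q 0 (int n + 2 - 2)"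
        by (rule Fb_rec[OF q]) simp
      moreover have "q powi (int n + 2 - 1) = q ^ Suc n"
        by (metis add_diff_cancel_right' of_nat_Suc power_int_of_nat one_add_one add.assoc add.commute)
      moreover have "int n + 2 - 1 = int (Suc n)" "int n + 2 - 2 = int n" "int n + 2 = int (Suc (Suc n))" by simp_all
      ultimately show ?thesis by simp
    qed
    finally show ?case using Suc by simp
  qed
  thus "Sg q 1 n = Fb q 0 (int n)" by simp
  have "Sg q q n = Fb q 2 (int n + 1) \<and> Sg q q (Suc n) = Fb q 2 (int (Suc n) + 1)"
  proof (induction n)
    case 0 then show ?case by (simp add: Sg_0 Sg_1 Fb_init)
  next
    case (Suc n)
    have "Sg q q (Suc (Suc n)) = Fb q 2 (int (Suc n) + 1) + q * q ^ Suc n * Fb q 2 (int n + 1)"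
      using Sg_rec[OF q, of q n] Suc by simp
    also have "\<dots> = Fb q 2 (int (Suc (Suc n)) + 1)"
    proof -
      define m where "m = int n + 3"
      have A: "Fb q 2 m = Fb q 2 (m - 1) + q powi (m - 1) * Fb q 2 (m - 2)"
        by (rule Fb_rec[OF q]) (simp add: m_def)
      have P: "q powi (int (Suc n) + 1) = q * q ^ Suc n"
      proof -
        have "int (Suc n) + 1 = int (Suc (Suc n))" by simp
        thus ?thesis by (simp only: power_int_of_nat power_Suc)
      qed
      have e: "m - 1 = int (Suc n) + 1" "m - 2 = int n + 1" "m = int (Suc (Suc n)) + 1" by (simp_all add: m_def)
      from A have "Fb q 2 m = Fb q 2 (int (Suc n) + 1) + (q * q ^ Suc n) * Fb q 2 (int n + 1)"
        by (simp only: e(1,2) P)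
      thus ?thesis by (simp only: e(3))
    qed
    finally show ?case using Suc by simp
  qed
  thus "Sg q q n = Fb q 2 (int n + 1)" by simp
qed

lemma theta_summable:
  fixes s u :: real
  assumes s: "0 \<le> s" "s < 1" and u: "0 < u"
  shows "(\<lambda>k::int. s powi trii k * u powi k) summable_on UNIV"
proof (rule summable_on_int_split)
  have "(\<lambda>n. s ^ tri n * u ^ n) summable_on UNIV"
    by (rule summable_on_nat_nonneg[OF summable_tri]) (use s u in auto)
  thus "(\<lambda>n. s powi trii (int n) * u powi int n) summable_on UNIV"
    by (simp add: trii_nat)
  have "summable (\<lambda>n. s ^ tri (n + 2) * (1/u) ^ (n + 2))"
    using summable_tri[of s "1/u"] s u by (intro summable_ignore_initial_segment) auto
  hence "summable (\<lambda>n. u * (s ^ tri (n + 2) * (1/u) ^ (n + 2)))" by (rule summable_mult)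
  hence "(\<lambda>n. u * (s ^ tri (n + 2) * (1/u) ^ (n + 2))) summable_on UNIV"
    by (rule summable_on_nat_nonneg) (use s u in auto)
  moreover have "s powi trii (- int n - 1) * u powi (- int n - 1) = u * (s ^ tri (n + 2) * (1/u) ^ (n + 2))" for n
  proof -
    have "u powi (- int n - 1) = u powi (- int (Suc n))"
      by (rule arg_cong[where f="\<lambda>e. u powi e"]) simp
    also have "\<dots> = inverse (u ^ Suc n)" by (simp only: power_int_minus power_int_of_nat)
    finally have "u powi (- int n - 1) = inverse (u ^ Suc n)" .
    moreover have B: "u * (1/u) ^ (n + 2) = inverse (u ^ Suc n)"
      using u by (simp add: power_one_over field_simps)
    moreover have t: "s powi trii (- int n - 1) = s ^ tri (n + 2)" by (simp only: trii_neg power_int_of_nat)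
    ultimately have "s powi trii (- int n - 1) * u powi (- int n - 1) = s ^ tri (n + 2) * (u * (1/u) ^ (n + 2))"
      by (simp only:)
    also have "\<dots> = u * (s ^ tri (n + 2) * (1/u) ^ (n + 2))" by (simp only: mult_ac)
    finally show ?thesis .
  qed
  ultimately show "(\<lambda>n. s powi trii (- int n - 1) * u powi (- int n - 1)) summable_on UNIV"
    by simp
qed

lemma norm_cf: "q \<noteq> 0 \<Longrightarrow> norm (cf q b l) = (norm q ^ 5) powi trii l * (norm q powi (3 - b)) powi l"
proof -
  assume q: "q \<noteq> 0"
  have "norm (cf q b l) = norm q powi (5 * trii l + (3 - b) * l)"
    by (simp add: cf_def norm_mult norm_power_int)
  also have "\<dots> = norm q powi (5 * trii l) * norm q powi ((3 - b) * l)"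
    using q by (simp add: power_int_add)
  also have "norm q powi (5 * trii l) = (norm q powi 5) powi trii l" by (rule power_int_mult)
  also have "norm q powi ((3 - b) * l) = (norm q powi (3 - b)) powi l" by (rule power_int_mult)
  finally show ?thesis by simp
qed

lemma cf_summable:
  assumes q: "norm q < 1" "q \<noteq> 0"
  shows "(\<lambda>l. norm (cf q b l)) summable_on UNIV"
proof -
  have "(\<lambda>k::int. (norm q ^ 5) powi trii k * (norm q powi (3 - b)) powi k) summable_on UNIV"
    by (rule theta_summable) (use q in \<open>auto simp: power_less_one_iff\<close>)
  thus ?thesis by (simp add: norm_cf[OF q(2)])
qed

lemma qbn_tendsto_fixed:
  assumes q: "norm q < 1"
  shows "(\<lambda>N. qbn q N j) \<longlonglongrightarrow> 1 / qpoch q q j"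
proof -
  have nz: "qpoch_inf q q \<noteq> 0" "qpoch q q j \<noteq> 0" using qpoch_inf_qq_nz qpoch_qq_nz q by auto
  have "(\<lambda>N. qpoch q q N / (qpoch q q j * qpoch q q (N - j)))
         \<longlonglongrightarrow> qpoch_inf q q / (qpoch q q j * qpoch_inf q q)"
    by (intro tendsto_divide tendsto_mult qpoch_tendsto qpoch_tendsto_comp q tendsto_const
          filterlim_minus_const_nat_at_top) (simp add: nz)
  moreover have "eventually (\<lambda>N. qpoch q q N / (qpoch q q j * qpoch q q (N - j)) = qbn q N j) sequentially"
    using eventually_ge_at_top[of j] by eventually_elim (simp add: qbn_closed_div[OF q])
  ultimately have "(\<lambda>N. qbn q N j) \<longlonglongrightarrow> qpoch_inf q q / (qpoch q q j * qpoch_inf q q)"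
    by (rule Lim_transform_eventually)
  thus ?thesis using nz by simp
qed

lemma Sg_infsum: "Sg q c n = infsum (\<lambda>j. q ^ (j^2) * c ^ j * qb q (int n - int j) (int j)) UNIV"
proof -
  have "((\<lambda>j. q ^ (j^2) * c ^ j * qb q (int n - int j) (int j)) has_sum Sg q c n) UNIV"
    unfolding Sg_def by (rule has_sum_finite_neutralI[of "{..n}"]) auto
  thus ?thesis by (rule infsumI[symmetric])
qed

lemma Sg_tendsto:
  assumes q: "norm q < 1" "q \<noteq> 0" and c: "norm c \<le> 1"
  shows "(\<lambda>n. Sg q c n) \<longlonglongrightarrow> infsum (\<lambda>j. q ^ (j^2) * c ^ j / qpoch q q j) UNIV"
    and "(\<lambda>j. q ^ (j^2) * c ^ j / qpoch q q j) summable_on UNIV"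
proof -
  let ?r = "norm q"
  let ?L = "Lr ?r"
  have L: "0 < ?L" using Lr_facts[of ?r] q by auto
  define f where "f = (\<lambda>n j. q ^ (j^2) * c ^ j * qb q (int n - int j) (int j))"
  define M where "M = (\<lambda>j. (1 / ?L) * ?r ^ j)"
  have Ms: "M summable_on UNIV"
  proof -
    have "summable (\<lambda>j. (1 / ?L) * ?r ^ j)"
      by (rule summable_mult, rule summable_geometric) (use q in simp)
    thus ?thesis unfolding M_def by (rule summable_on_nat_nonneg) (use L in simp)
  qed
  have bound: "norm (f n j) \<le> M j" for n j
  proof -
    have "norm (f n j) = ?r ^ (j^2) * norm c ^ j * norm (qb q (int n - int j) (int j))"
      by (simp add: f_def norm_mult norm_power)
    also have "\<dots> \<le> ?r ^ j * 1 * (1 / ?L)"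
    proof (intro mult_mono)
      show "?r ^ (j^2) \<le> ?r ^ j" using q by (intro power_decreasing) (auto simp: power2_eq_square)
      show "norm c ^ j \<le> 1" using c by (simp add: power_le_one)
      show "norm (qb q (int n - int j) (int j)) \<le> 1 / ?L" by (rule norm_qb_le[OF q(1)])
    qed auto
    finally show ?thesis by (simp add: M_def)
  qed
  have lim: "(\<lambda>n. f n j) \<longlonglongrightarrow> q ^ (j^2) * c ^ j / qpoch q q j" for j
  proof -
    have "(\<lambda>n. qbn q (n - j) j) \<longlonglongrightarrow> 1 / qpoch q q j"
      by (rule filterlim_compose[OF qbn_tendsto_fixed[OF q(1)] filterlim_minus_const_nat_at_top])
    hence "(\<lambda>n. q ^ (j^2) * c ^ j * qbn q (n - j) j) \<longlonglongrightarrow> q ^ (j^2) * c ^ j * (1 / qpoch q q j)"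
      by (intro tendsto_mult tendsto_const)
    hence l1: "(\<lambda>n. q ^ (j^2) * c ^ j * qbn q (n - j) j) \<longlonglongrightarrow> q ^ (j^2) * c ^ j / qpoch q q j"
      by simp
    moreover have "eventually (\<lambda>n. q ^ (j^2) * c ^ j * qbn q (n - j) j = f n j) sequentially"
      using eventually_ge_at_top[of j]
    proof eventually_elim
      case (elim n)
      hence "int n - int j = int (n - j)" by simp
      thus ?case by (simp only: f_def qb_nat)
    qed
    from Lim_transform_eventually[OF l1 this] show ?thesis .
  qed
  have "(\<lambda>n. infsum (f n) UNIV) \<longlonglongrightarrow> infsum (\<lambda>j. q ^ (j^2) * c ^ j / qpoch q q j) UNIV"
    by (rule tannery_infsum(1)[OF Ms bound lim])
  thus "(\<lambda>n. Sg q c n) \<longlonglongrightarrow> infsum (\<lambda>j. q ^ (j^2) * c ^ j / qpoch q q j) UNIV"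
    by (simp only: Sg_infsum f_def)
  show "(\<lambda>j. q ^ (j^2) * c ^ j / qpoch q q j) summable_on UNIV"
    by (rule tannery_infsum(2)[OF Ms bound lim])
qed

lemma Fb_tendsto:
  assumes q: "norm q < 1" "q \<noteq> 0"
  shows "(\<lambda>n. Fb q b (int n)) \<longlonglongrightarrow> infsum (\<lambda>l. cf q b l * (1 / qpoch_inf q q)) UNIV"
proof -
  let ?r = "norm q"
  let ?L = "Lr ?r"
  have L: "0 < ?L" using Lr_facts[of ?r] q by auto
  define D where "D = (\<lambda>l n. (int n + b - 5 * l) div 2)"
  define f where "f = (\<lambda>n l. cf q b l * qb q (int n) (D l n))"
  define M where "M = (\<lambda>l. (1 / ?L) * norm (cf q b l))"
  have Ms: "M summable_on UNIV"
    unfolding M_def by (intro summable_on_cmult_right cf_summable q)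
  have bound: "norm (f n l) \<le> M l" for n l
  proof -
    have "norm (f n l) = norm (cf q b l) * norm (qb q (int n) (D l n))"
      by (simp add: f_def norm_mult)
    also have "\<dots> \<le> norm (cf q b l) * (1 / ?L)"
      by (intro mult_left_mono norm_qb_le q) auto
    finally show ?thesis by (simp add: M_def mult_ac)
  qed
  have lim: "(\<lambda>n. f n l) \<longlonglongrightarrow> cf q b l * (1 / qpoch_inf q q)" for l
  proof -
    define a where "a = (\<lambda>n. nat (D l n))"
    have ev: "eventually (\<lambda>n. int Z \<le> D l n \<and> int Z + D l n \<le> int n) sequentially" for Z
    proof (rule eventually_sequentiallyI[of "nat (2 * int Z + \<bar>b\<bar> + 5 * \<bar>l\<bar> + 2)"])
      fix n assume n: "nat (2 * int Z + \<bar>b\<bar> + 5 * \<bar>l\<bar> + 2) \<le> n"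
      hence n': "2 * int Z + \<bar>b\<bar> + 5 * \<bar>l\<bar> + 2 \<le> int n" by simp
      have "2 * D l n \<le> int n + b - 5 * l" "int n + b - 5 * l \<le> 2 * D l n + 1"
        unfolding D_def by (rule div2_facts)+
      thus "int Z \<le> D l n \<and> int Z + D l n \<le> int n" using n' by linarith
    qed
    have D0: "eventually (\<lambda>n. 0 \<le> D l n) sequentially"
      using ev[of 0] by eventually_elim simp
    have a_top: "filterlim a at_top sequentially"
      unfolding filterlim_at_top
    proof
      fix Z show "eventually (\<lambda>n. Z \<le> a n) sequentially"
        using ev[of Z] by eventually_elim (auto simp: a_def le_nat_iff)
    qed
    have b_top: "filterlim (\<lambda>n. n - a n) at_top sequentially"
      unfolding filterlim_at_top
    proof
      fix Z show "eventually (\<lambda>n. Z \<le> n - a n) sequentially"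
        using ev[of Z] by eventually_elim (auto simp: a_def)
    qed
    have le: "eventually (\<lambda>n. a n \<le> n) sequentially"
      using ev[of 0] by eventually_elim (auto simp: a_def)
    have "(\<lambda>n. qbn q n (a n)) \<longlonglongrightarrow> 1 / qpoch_inf q q"
      by (rule qbn_tendsto[OF q(1) a_top b_top le])
    hence "(\<lambda>n. cf q b l * qbn q n (a n)) \<longlonglongrightarrow> cf q b l * (1 / qpoch_inf q q)"
      by (intro tendsto_mult tendsto_const)
    moreover have "eventually (\<lambda>n. cf q b l * qbn q n (a n) = f n l) sequentially"
      using D0 by eventually_elim (simp add: f_def a_def qb_def)
    ultimately show ?thesis by (rule Lim_transform_eventually)
  qed
  have "(\<lambda>n. infsum (f n) UNIV) \<longlonglongrightarrow> infsum (\<lambda>l. cf q b l * (1 / qpoch_inf q q)) UNIV"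
    by (rule tannery_infsum(1)[OF Ms bound lim])
  moreover have "infsum (f n) UNIV = Fb q b (int n)" for n
    by (simp add: Fb_def f_def D_def)
  ultimately show ?thesis by simp
qed

theorem RR_theta:
  assumes q: "norm q < 1" "q \<noteq> 0"
  shows "infsum (\<lambda>j. q ^ (j^2) / qpoch q q j) UNIV = infsum (cf q 0) UNIV / qpoch_inf q q"
    and "infsum (\<lambda>j. q ^ (j^2) * q ^ j / qpoch q q j) UNIV = infsum (cf q 2) UNIV / qpoch_inf q q"
    and "(\<lambda>j. q ^ (j^2) / qpoch q q j) summable_on UNIV"
    and "(\<lambda>j. q ^ (j^2) * q ^ j / qpoch q q j) summable_on UNIV"
proof -
  have nz: "qpoch_inf q q \<noteq> 0" by (rule qpoch_inf_qq_nz[OF q(1)])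
  have c1: "infsum (\<lambda>l. cf q b l * (1 / qpoch_inf q q)) UNIV = infsum (cf q b) UNIV / qpoch_inf q q" for b
  proof -
    have "infsum (\<lambda>l. cf q b l * (1 / qpoch_inf q q)) UNIV = infsum (cf q b) UNIV * (1 / qpoch_inf q q)"
      by (rule infsum_cmult_left')
    thus ?thesis by simp
  qed
  have A: "(\<lambda>n. Sg q 1 n) \<longlonglongrightarrow> infsum (\<lambda>j. q ^ (j^2) / qpoch q q j) UNIV"
    using Sg_tendsto(1)[OF q, of 1] by simp
  have B: "(\<lambda>n. Sg q 1 n) \<longlonglongrightarrow> infsum (cf q 0) UNIV / qpoch_inf q q"
    unfolding Sg_Fb(1)[OF q] c1[symmetric] by (rule Fb_tendsto[OF q])
  show "infsum (\<lambda>j. q ^ (j^2) / qpoch q q j) UNIV = infsum (cf q 0) UNIV / qpoch_inf q q"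
    using LIMSEQ_unique[OF A B] .
  have A2: "(\<lambda>n. Sg q q n) \<longlonglongrightarrow> infsum (\<lambda>j. q ^ (j^2) * q ^ j / qpoch q q j) UNIV"
    using Sg_tendsto(1)[OF q, of q] q by simp
  have "(\<lambda>n. Fb q 2 (int (Suc n))) \<longlonglongrightarrow> infsum (cf q 2) UNIV / qpoch_inf q q"
    unfolding c1[symmetric] by (rule LIMSEQ_Suc[OF Fb_tendsto[OF q]])
  hence B2: "(\<lambda>n. Sg q q n) \<longlonglongrightarrow> infsum (cf q 2) UNIV / qpoch_inf q q"
    unfolding Sg_Fb(2)[OF q] by (simp add: add.commute)
  show "infsum (\<lambda>j. q ^ (j^2) * q ^ j / qpoch q q j) UNIV = infsum (cf q 2) UNIV / qpoch_inf q q"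
    using LIMSEQ_unique[OF A2 B2] .
  show "(\<lambda>j. q ^ (j^2) / qpoch q q j) summable_on UNIV"
    using Sg_tendsto(2)[OF q, of 1] by simp
  show "(\<lambda>j. q ^ (j^2) * q ^ j / qpoch q q j) summable_on UNIV"
    using Sg_tendsto(2)[OF q, of q] q by simp
qed

section \<open>Euler's identities\<close>

lemma qbin_thm: "qpoch (-z) q n = (\<Sum>k\<le>n. q ^ tri k * z ^ k * qbn q n k)"
proof (induction n arbitrary: z)
  case 0 then show ?case by simp
next
  case (Suc n)
  define g where "g = (\<lambda>z k. q ^ tri k * z ^ k * qbn q n k)"
  have L: "qpoch (-z) q (Suc n) = (1 + z) * qpoch (-(z * q)) q n"
    using qpoch_add[of "-z" q 1 n] by (simp add: qpoch_def)
  have "(\<Sum>k\<le>Suc n. q ^ tri k * z ^ k * qbn q (Suc n) k)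
        = 1 + (\<Sum>k\<le>n. q ^ tri (Suc k) * z ^ Suc k * qbn q (Suc n) (Suc k))"
    by (subst sum.atMost_Suc_shift) simp
  also have "(\<Sum>k\<le>n. q ^ tri (Suc k) * z ^ Suc k * qbn q (Suc n) (Suc k))
        = (\<Sum>k\<le>n. z * g (z * q) k + g (z * q) (Suc k))"
  proof (rule sum.cong)
    fix k assume "k \<in> {..n}"
    have "q ^ tri (Suc k) * z ^ Suc k * qbn q (Suc n) (Suc k)
          = q ^ tri (Suc k) * z ^ Suc k * qbn q n k + q ^ tri (Suc k) * z ^ Suc k * q ^ Suc k * qbn q n (Suc k)"
      by (simp add: algebra_simps)
    also have "q ^ tri (Suc k) * z ^ Suc k * qbn q n k = z * g (z * q) k"
      by (simp add: g_def tri_Suc power_add power_mult_distrib mult_ac)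
    also have "q ^ tri (Suc k) * z ^ Suc k * q ^ Suc k * qbn q n (Suc k) = g (z * q) (Suc k)"
      by (simp add: g_def power_mult_distrib mult_ac)
    finally show "q ^ tri (Suc k) * z ^ Suc k * qbn q (Suc n) (Suc k) = z * g (z * q) k + g (z * q) (Suc k)" .
  qed simp
  also have "\<dots> = z * (\<Sum>k\<le>n. g (z * q) k) + (\<Sum>k\<le>n. g (z * q) (Suc k))"
    by (simp add: sum.distrib sum_distrib_left)
  also have "1 + (z * (\<Sum>k\<le>n. g (z * q) k) + (\<Sum>k\<le>n. g (z * q) (Suc k)))
             = z * (\<Sum>k\<le>n. g (z * q) k) + (\<Sum>k\<le>Suc n. g (z * q) k)"
  proof -
    have "(\<Sum>k\<le>Suc n. g (z * q) k) = g (z * q) 0 + (\<Sum>k\<le>n. g (z * q) (Suc k))"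
      by (rule sum.atMost_Suc_shift)
    moreover have "g (z * q) 0 = 1" by (simp add: g_def)
    ultimately show ?thesis by simp
  qed
  also have "(\<Sum>k\<le>Suc n. g (z * q) k) = (\<Sum>k\<le>n. g (z * q) k)"
    by (simp add: g_def qbn_gt)
  also have "(\<Sum>k\<le>n. g (z * q) k) = qpoch (-(z * q)) q n"
    unfolding g_def by (rule Suc.IH[symmetric])
  finally show ?case using L by (simp add: algebra_simps)
qed

lemma euler2:
  assumes q: "norm q < 1"
  shows "((\<lambda>k. q ^ tri k * z ^ k / qpoch q q k) has_sum qpoch_inf (-z) q) UNIV"
proof -
  let ?r = "norm q"
  let ?L = "Lr ?r"
  have L: "0 < ?L" using Lr_facts[of ?r] q by auto
  define f where "f = (\<lambda>n k. q ^ tri k * z ^ k * qbn q n k)"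
  define M where "M = (\<lambda>k. (1 / ?L) * (?r ^ tri k * norm z ^ k))"
  have Ms: "M summable_on UNIV"
  proof -
    have "summable (\<lambda>k. (1 / ?L) * (?r ^ tri k * norm z ^ k))"
      by (rule summable_mult, rule summable_tri) (use q in auto)
    thus ?thesis unfolding M_def by (rule summable_on_nat_nonneg) (use L in simp)
  qed
  have bound: "norm (f n k) \<le> M k" for n k
  proof -
    have "norm (f n k) = (?r ^ tri k * norm z ^ k) * norm (qbn q n k)"
      by (simp add: f_def norm_mult norm_power)
    also have "\<dots> \<le> (?r ^ tri k * norm z ^ k) * (1 / ?L)"
      by (intro mult_left_mono norm_qbn_le q) auto
    finally show ?thesis by (simp add: M_def mult_ac)
  qed
  have lim: "(\<lambda>n. f n k) \<longlonglongrightarrow> q ^ tri k * z ^ k / qpoch q q k" for k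
  proof -
    have "(\<lambda>n. f n k) \<longlonglongrightarrow> q ^ tri k * z ^ k * (1 / qpoch q q k)"
      unfolding f_def by (intro tendsto_mult tendsto_const qbn_tendsto_fixed q)
    thus ?thesis by simp
  qed
  have A: "(\<lambda>n. infsum (f n) UNIV) \<longlonglongrightarrow> infsum (\<lambda>k. q ^ tri k * z ^ k / qpoch q q k) UNIV"
    by (rule tannery_infsum(1)[OF Ms bound lim])
  have S: "(\<lambda>k. q ^ tri k * z ^ k / qpoch q q k) summable_on UNIV"
    by (rule tannery_infsum(2)[OF Ms bound lim])
  have fn: "infsum (f n) UNIV = qpoch (-z) q n" for n
  proof -
    have "(f n has_sum qpoch (-z) q n) UNIV"
      unfolding qbin_thm f_def by (rule has_sum_finite_neutralI[of "{..n}"]) (auto simp: qbn_gt)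
    thus ?thesis by (rule infsumI)
  qed
  have B: "(\<lambda>n. infsum (f n) UNIV) \<longlonglongrightarrow> qpoch_inf (-z) q"
    unfolding fn by (rule qpoch_tendsto[OF q])
  have "infsum (\<lambda>k. q ^ tri k * z ^ k / qpoch q q k) UNIV = qpoch_inf (-z) q"
    using LIMSEQ_unique[OF A B] .
  thus ?thesis using has_sum_infsum[OF S] by simp
qed

lemma euler1:
  assumes q: "norm q < 1" and z: "norm z < 1"
  shows "((\<lambda>k. z ^ k / qpoch q q k) has_sum (1 / qpoch_inf z q)) UNIV"
proof -
  let ?r = "norm q"
  let ?L = "Lr ?r"
  have L: "0 < ?L" using Lr_facts[of ?r] q by auto
  define a where "a = (\<lambda>k. z ^ k / qpoch q q k)"
  define b where "b = (\<lambda>k. q ^ tri k * (-z) ^ k / qpoch q q k)"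
  have bsum: "(b has_sum qpoch_inf z q) UNIV"
    using euler2[OF q, of "-z"] by (simp add: b_def)
  have an: "summable (\<lambda>k. norm (a k))"
  proof (rule summable_comparison_test)
    show "\<exists>N. \<forall>n\<ge>N. norm (norm (a n)) \<le> (1 / ?L) * norm z ^ n"
    proof (intro exI allI impI)
      fix n
      have "norm (a n) = norm z ^ n * norm (1 / qpoch q q n)"
        by (simp add: a_def norm_mult norm_power norm_divide)
      also have "\<dots> \<le> norm z ^ n * (1 / ?L)"
        by (intro mult_left_mono norm_inv_qpoch_le q) auto
      finally show "norm (norm (a n)) \<le> (1 / ?L) * norm z ^ n" by (simp add: mult_ac)
    qed
    show "summable (\<lambda>n. (1 / ?L) * norm z ^ n)"
      by (rule summable_mult, rule summable_geometric) (use z in simp)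
  qed
  have bn: "summable (\<lambda>k. norm (b k))"
  proof -
    have "b summable_on UNIV" using bsum by (rule has_sum_imp_summable)
    hence "(\<lambda>k. norm (b k)) summable_on UNIV"
      using summable_on_iff_abs_summable_on_complex by blast
    thus ?thesis using summable_on_UNIV_nonneg_real_iff[of "\<lambda>k. norm (b k)"] by simp
  qed
  have asum: "a sums (\<Sum>k. a k)" using summable_norm_cancel[OF an] by (simp add: summable_sums)
  have bsums: "(\<Sum>k. b k) = qpoch_inf z q"
    using has_sum_imp_sums[OF bsum] by (simp add: sums_iff)
  have coef: "(\<Sum>i\<le>k. a i * b (k - i)) = (if k = 0 then 1 else 0)" for k
  proof -
    have nz: "qpoch q q j \<noteq> 0" for j using qpoch_qq_nz[OF q] .
    have "(\<Sum>i\<le>k. a i * b (k - i)) = (\<Sum>i\<le>k. z ^ k / qpoch q q k * (q ^ tri (k - i) * (-1) ^ (k - i) * qbn q k (k - i)))"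
    proof (rule sum.cong)
      fix i assume i: "i \<in> {..k}"
      hence ik: "i \<le> k" by simp
      have cl: "qbn q k (k - i) * qpoch q q (k - i) * qpoch q q i = qpoch q q k"
        using qbn_closed[of "k - i" k q] ik by simp
      have zz: "z ^ i * z ^ (k - i) = z ^ k" using ik by (simp flip: power_add)
      show "a i * b (k - i) = z ^ k / qpoch q q k * (q ^ tri (k - i) * (-1) ^ (k - i) * qbn q k (k - i))"
        unfolding a_def b_def using nz cl zz
        by (simp add: field_simps power_mult_distrib[of "-1" z, symmetric, simplified] )
           (simp add: power_minus' algebra_simps flip: cl zz)
    qed simp
    also have "\<dots> = z ^ k / qpoch q q k * (\<Sum>i\<le>k. q ^ tri (k - i) * (-1) ^ (k - i) * qbn q k (k - i))"
      by (simp add: sum_distrib_left)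
    also have "(\<Sum>i\<le>k. q ^ tri (k - i) * (-1) ^ (k - i) * qbn q k (k - i)) = (\<Sum>j\<le>k. q ^ tri j * (-1) ^ j * qbn q k j)"
    proof -
      have "(\<Sum>i\<le>k. q ^ tri (k - i) * (-1) ^ (k - i) * qbn q k (k - i))
            = (\<Sum>i<Suc k. (\<lambda>j. q ^ tri j * (-1) ^ j * qbn q k j) (Suc k - Suc i))"
        by (simp add: lessThan_Suc_atMost)
      also have "\<dots> = (\<Sum>j<Suc k. q ^ tri j * (-1) ^ j * qbn q k j)"
        by (rule sum.nat_diff_reindex)
      finally show ?thesis by (simp add: lessThan_Suc_atMost)
    qed
    also have "\<dots> = qpoch (- (-1)) q k" by (rule qbin_thm[symmetric])
    also have "qpoch (- (-1)) q k = (if k = 0 then 1 else 0)"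
    proof (cases k)
      case 0 then show ?thesis by simp
    next
      case (Suc m)
      have "(\<Prod>j<k. 1 - - (- 1) * q ^ j) = 0"
        by (rule prod_zero) (use Suc in \<open>auto intro!: bexI[of _ 0]\<close>)
      thus ?thesis using Suc by (simp add: qpoch_def)
    qed
    finally show ?thesis by simp
  qed
  have "(\<lambda>k. \<Sum>i\<le>k. a i * b (k - i)) sums ((\<Sum>k. a k) * (\<Sum>k. b k))"
    by (rule Cauchy_product_sums[OF an bn])
  moreover have "(\<lambda>k. \<Sum>i\<le>k. a i * b (k - i)) sums 1"
  proof -
    have "(\<lambda>k. if k = 0 then (1::complex) else 0) sums 1"
      using sums_single[of 0 "\<lambda>_. 1::complex"] by simp
    thus ?thesis using coef by simp
  qed
  ultimately have prod1: "(\<Sum>k. a k) * qpoch_inf z q = 1"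
    using sums_unique2 bsums by metis
  have nzP: "qpoch_inf z q \<noteq> 0" by (rule qpoch_inf_nz'[OF q z])
  have "(\<Sum>k. a k) = 1 / qpoch_inf z q" using prod1 nzP by (simp add: field_simps)
  hence "a sums (1 / qpoch_inf z q)" using asum by simp
  hence "(a has_sum (1 / qpoch_inf z q)) UNIV"
    by (rule norm_summable_imp_has_sum[OF an])
  thus ?thesis by (simp add: a_def)
qed

section \<open>Jacobi triple product\<close>

theorem jtp:
  assumes q: "norm q < 1" "q \<noteq> 0" and w: "w \<noteq> 0" "norm q < norm w"
  shows "((\<lambda>k::int. (-1) powi k * q powi trii k * w powi k)
          has_sum (qpoch_inf w q * qpoch_inf (q / w) q * qpoch_inf q q)) UNIV"
proof -
  define \<theta> where "\<theta> = (\<lambda>k::int. (-1) powi k * q powi trii k * w powi k)"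
  have \<theta>n: "norm (\<theta> k) = norm q powi trii k * norm w powi k" for k
    by (simp add: \<theta>_def norm_mult norm_power_int)
  have \<theta>s: "\<theta> summable_on UNIV"
  proof -
    have "(\<lambda>k. norm q powi trii k * norm w powi k) summable_on UNIV"
      by (rule theta_summable) (use q w in auto)
    hence "(\<lambda>k. norm (\<theta> k)) summable_on UNIV" by (simp add: \<theta>n)
    thus ?thesis by (rule abs_summable_summable)
  qed
  define \<sigma> where "\<sigma> = infsum \<theta> UNIV"
  have \<theta>h: "(\<theta> has_sum \<sigma>) UNIV" unfolding \<sigma>_def using \<theta>s by simp
  define P where "P = qpoch_inf (q / w) q"
  have qw: "norm (q / w) < 1" using w by (simp add: norm_divide)
  have Pnz: "P \<noteq> 0" unfolding P_def by (rule qpoch_inf_nz'[OF q(1) qw])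
  define e where "e = (\<lambda>m. (q / w) ^ m / qpoch q q m)"
  have eh: "(e has_sum (1 / P)) UNIV" unfolding e_def P_def by (rule euler1[OF q(1) qw])
  have es: "(\<lambda>m. norm (e m)) summable_on UNIV"
    using has_sum_imp_summable[OF eh] summable_on_iff_abs_summable_on_complex by blast
  have \<psi>s: "(\<lambda>(k, m). \<theta> k * e m) summable_on (UNIV \<times> UNIV)"
    by (rule prod_summable) (use \<theta>s summable_on_iff_abs_summable_on_complex es in auto)
  have \<psi>h: "((\<lambda>(k, m). \<theta> k * e m) has_sum (\<sigma> * (1 / P))) (UNIV \<times> UNIV)"
  proof (rule has_sum_SigmaI[where g = "\<lambda>k. \<theta> k * (1 / P)"])
    show "((\<lambda>m. (\<lambda>(k, m). \<theta> k * e m) (k, m)) has_sum \<theta> k * (1 / P)) UNIV" for k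
      using has_sum_cmult_right[OF eh, of "\<theta> k"] by simp
    show "((\<lambda>k. \<theta> k * (1 / P)) has_sum \<sigma> * (1 / P)) UNIV"
      by (rule has_sum_cmult_left[OF \<theta>h])
    show "(\<lambda>(k, m). \<theta> k * e m) summable_on UNIV \<times> UNIV" by (rule \<psi>s)
  qed
  define \<phi> where "\<phi> = (\<lambda>(n::int, m::nat). (-1) powi (n + int m) * q powi (trii (n + int m) + int m)
                          * w powi n / qpoch q q m)"
  have \<phi>\<psi>: "\<phi> (n, m) = \<theta> (n + int m) * e m" for n m
  proof -
    have A: "w powi (n + int m) * (q / w) ^ m = w powi n * q ^ m"
      using w by (simp add: power_int_add power_divide field_simps)
    have B: "q powi (trii (n + int m) + int m) = q powi trii (n + int m) * q ^ m"
      using q by (simp add: power_int_add)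
    have "\<theta> (n + int m) * e m = ((-1) powi (n + int m) * q powi trii (n + int m) * (w powi (n + int m) * (q / w) ^ m)) / qpoch q q m"
      unfolding \<theta>_def e_def by (simp add: mult_ac)
    also have "\<dots> = ((-1) powi (n + int m) * (q powi trii (n + int m) * q ^ m) * w powi n) / qpoch q q m"
      by (simp only: A) (simp add: mult_ac)
    also have "\<dots> = \<phi> (n, m)" by (simp only: \<phi>_def case_prod_conv B)
    finally show ?thesis by simp
  qed
  have \<phi>h: "(\<phi> has_sum (\<sigma> * (1 / P))) (UNIV \<times> UNIV)"
  proof -
    have "(\<phi> has_sum (\<sigma> * (1 / P))) UNIV = ((\<lambda>(k, m). \<theta> k * e m) has_sum (\<sigma> * (1 / P))) UNIV"
      by (rule has_sum_reindex_bij_witness[where j = "\<lambda>(n, m). (n + int m, m)" and i = "\<lambda>(k, m). (k - int m, m)"])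
         (auto simp: \<phi>\<psi>)
    thus ?thesis using \<psi>h by simp
  qed
  define h where "h = (\<lambda>n::int. (-1) powi n * q powi trii n * w powi n * qpoch_inf (q powi (n + 1)) q)"
  have inner: "((\<lambda>m. \<phi> (n, m)) has_sum h n) UNIV" for n
  proof -
    define z where "z = - (q powi (n + 1))"
    define C where "C = (-1) powi n * q powi trii n * w powi n"
    have "((\<lambda>m. q ^ tri m * z ^ m / qpoch q q m) has_sum qpoch_inf (-z) q) UNIV"
      by (rule euler2[OF q(1)])
    hence "((\<lambda>m. C * (q ^ tri m * z ^ m / qpoch q q m)) has_sum C * qpoch_inf (-z) q) UNIV"
      by (rule has_sum_cmult_right)
    moreover have "\<phi> (n, m) = C * (q ^ tri m * z ^ m / qpoch q q m)" for m
    proof -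
      have e1: "(-1 :: complex) powi (n + int m) = (-1) powi n * (-1) ^ m"
        by (simp add: power_int_add)
      have e2: "q powi (trii (n + int m) + int m) = q powi trii n * (q ^ tri m * (q powi (n + 1)) ^ m)"
      proof -
        have "trii (n + int m) + int m = trii n + (int (tri m) + (n + 1) * int m)"
          by (simp add: trii_add trii_nat algebra_simps)
        hence "q powi (trii (n + int m) + int m) = q powi trii n * (q powi int (tri m) * q powi ((n + 1) * int m))"
          using q(2) by (simp add: power_int_add)
        also have "q powi ((n + 1) * int m) = (q powi (n + 1)) ^ m"
          by (simp add: power_int_mult)
        finally show ?thesis by simp
      qed
      have e3: "z ^ m = (-1) ^ m * (q powi (n + 1)) ^ m"
        by (simp add: z_def power_minus')
      show ?thesis unfolding \<phi>_def C_def e3 by (simp add: e1 e2 mult_ac)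
    qed
    moreover have "C * qpoch_inf (-z) q = h n" by (simp add: C_def z_def h_def)
    ultimately show ?thesis by simp
  qed
  have hh1: "(h has_sum (\<sigma> * (1 / P))) UNIV"
    by (rule has_sum_SigmaD[where B = "\<lambda>_. UNIV"]) (use \<phi>h inner in auto)
  have hneg: "h n = 0" if "n < 0" for n
  proof -
    have "q powi (n + 1) * q ^ nat (- n - 1) = 1"
    proof -
      have "q ^ nat (- n - 1) = q powi (- n - 1)" using that by (simp add: power_int_def)
      moreover have "q powi (n + 1) * q powi (- n - 1) = q powi 0"
        by (rule powi_combine[OF q(2)]) simp
      ultimately show ?thesis by simp
    qed
    hence "qpoch_inf (q powi (n + 1)) q = 0" by (rule qpoch_inf_zero[OF q(1)])
    thus ?thesis by (simp add: h_def)
  qed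
  have hpos: "h (int j) = qpoch_inf q q * (q ^ tri j * (-w) ^ j / qpoch q q j)" for j
  proof -
    have "qpoch_inf q q = qpoch q q j * qpoch_inf (q * q ^ j) q" by (rule qpoch_inf_split[OF q(1)])
    moreover have "q powi (int j + 1) = q * q ^ j"
    proof -
      have "int j + 1 = int (Suc j)" by simp
      thus ?thesis by (simp only: power_int_of_nat power_Suc)
    qed
    moreover have "qpoch q q j \<noteq> 0" by (rule qpoch_qq_nz[OF q(1)])
    ultimately have "qpoch_inf (q powi (int j + 1)) q = qpoch_inf q q / qpoch q q j"
      by (simp add: field_simps)
    thus ?thesis by (simp add: h_def trii_nat power_minus' field_simps)
  qed
  have "((\<lambda>j. qpoch_inf q q * (q ^ tri j * (-w) ^ j / qpoch q q j)) has_sum qpoch_inf q q * qpoch_inf w q) UNIV"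
    using has_sum_cmult_right[OF euler2[OF q(1), of "-w"]] by simp
  hence "((h \<circ> int) has_sum qpoch_inf q q * qpoch_inf w q) UNIV" by (simp add: o_def hpos)
  hence "(h has_sum qpoch_inf q q * qpoch_inf w q) (range int)"
    by (subst has_sum_reindex) auto
  hence hh2: "(h has_sum qpoch_inf q q * qpoch_inf w q) UNIV"
  proof (subst (asm) has_sum_cong_neutral[where T = UNIV and g = h])
    fix x assume "x \<in> UNIV - range int"
    hence "x < 0" by (metis DiffE nonneg_int_cases not_le rangeI)
    thus "h x = 0" by (rule hneg)
  qed auto
  have "\<sigma> * (1 / P) = qpoch_inf q q * qpoch_inf w q" using has_sum_unique[OF hh1 hh2] .
  hence "\<sigma> = qpoch_inf w q * P * qpoch_inf q q" using Pnz by (simp add: field_simps)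
  thus ?thesis using \<theta>h unfolding \<theta>_def P_def by simp
qed

section \<open>The Rogers-Ramanujan identities\<close>

lemma qpoch_5: "qpoch a q 5 = (1 - a) * (1 - a * q) * (1 - a * q^2) * (1 - a * q^3) * (1 - a * q^4)"
  by (simp add: qpoch_def numeral_eq_Suc lessThan_Suc mult_ac)

lemma residue_split_fin:
  "qpoch q q (5 * N) = qpoch q (q^5) N * qpoch (q^2) (q^5) N * qpoch (q^3) (q^5) N
                       * qpoch (q^4) (q^5) N * qpoch (q^5) (q^5) N"
proof (induction N)
  case 0 then show ?case by simp
next
  case (Suc N)
  define T where "T = (q ^ 5) ^ N"
  have e: "5 * Suc N = 5 * N + 5" by simp
  have "qpoch q q (5 * Suc N) = qpoch q q (5 * N) * qpoch (q * q ^ (5 * N)) q 5"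
    unfolding e by (rule qpoch_add)
  also have "q ^ (5 * N) = T" by (simp add: T_def power_mult)
  also have "qpoch (q * T) q 5 = (1 - q * T) * (1 - q^2 * T) * (1 - q^3 * T) * (1 - q^4 * T) * (1 - q^5 * T)"
    by (simp only: qpoch_5) (simp add: eval_nat_numeral mult_ac)
  finally show ?case using Suc by (simp add: qpoch_Suc T_def mult_ac)
qed

lemma residue_split:
  assumes q: "norm q < 1"
  shows "qpoch_inf q q = qpoch_inf q (q^5) * qpoch_inf (q^2) (q^5) * qpoch_inf (q^3) (q^5)
                       * qpoch_inf (q^4) (q^5) * qpoch_inf (q^5) (q^5)"
proof -
  have q5: "norm (q ^ 5) < 1" using q by (simp add: norm_power power_less_one_iff)
  have sm: "strict_mono (\<lambda>N::nat. 5 * N)" by (auto simp: strict_mono_def)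
  have A: "(\<lambda>N. qpoch q q (5 * N)) \<longlonglongrightarrow> qpoch_inf q q"
    using LIMSEQ_subseq_LIMSEQ[OF qpoch_tendsto[OF q] sm] by (simp add: o_def)
  have B: "(\<lambda>N. qpoch q q (5 * N)) \<longlonglongrightarrow> qpoch_inf q (q^5) * qpoch_inf (q^2) (q^5) * qpoch_inf (q^3) (q^5)
                       * qpoch_inf (q^4) (q^5) * qpoch_inf (q^5) (q^5)"
    unfolding residue_split_fin by (intro tendsto_mult qpoch_tendsto q5)
  show ?thesis using LIMSEQ_unique[OF A B] .
qed

lemma powi_5t: "(q::complex) \<noteq> 0 \<Longrightarrow> q powi (5 * t + c * k) = (q ^ 5) powi t * (q powi c) powi k"
proof -
  assume q: "q \<noteq> 0"
  have "q powi (5 * t + c * k) = q powi (5 * t) * q powi (c * k)" using q by (simp add: power_int_add)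
  also have "q powi (5 * t) = (q powi 5) powi t" by (rule power_int_mult)
  also have "q powi (c * k) = (q powi c) powi k" by (rule power_int_mult)
  also have "q powi (5::int) = q ^ 5" by (metis of_nat_numeral power_int_of_nat)
  finally show ?thesis .
qed

lemma cf_jtp:
  assumes q: "norm q < 1" "q \<noteq> 0"
  shows "infsum (cf q 0) UNIV = qpoch_inf (q^3) (q^5) * qpoch_inf (q^2) (q^5) * qpoch_inf (q^5) (q^5)"
    and "infsum (cf q 2) UNIV = qpoch_inf q (q^5) * qpoch_inf (q^4) (q^5) * qpoch_inf (q^5) (q^5)"
proof -
  have r: "0 < norm q" using q by simp
  have q5: "norm (q ^ 5) < 1" "q ^ 5 \<noteq> 0" using q by (simp_all add: norm_power power_less_one_iff)
  have lt3: "norm (q ^ 5) < norm (q ^ 3)"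
    using q r by (simp add: norm_power power_strict_decreasing)
  have lt1: "norm (q ^ 5) < norm q"
    using q r power_strict_decreasing[of 1 5 "norm q"] by (simp add: norm_power)
  have "cf q 0 = (\<lambda>k. (-1) powi k * (q ^ 5) powi trii k * (q ^ 3) powi k)"
  proof
    fix k
    have "q powi (5 * trii k + 3 * k) = (q ^ 5) powi trii k * (q powi 3) powi k"
      by (rule powi_5t[OF q(2)])
    moreover have "q powi (3::int) = q ^ 3" by (metis of_nat_numeral power_int_of_nat)
    ultimately show "cf q 0 k = (-1) powi k * (q ^ 5) powi trii k * (q ^ 3) powi k"
      by (simp add: cf_def mult_ac)
  qed
  moreover have "((\<lambda>k. (-1) powi k * (q ^ 5) powi trii k * (q ^ 3) powi k) has_sum
      (qpoch_inf (q^3) (q^5) * qpoch_inf (q^5 / q^3) (q^5) * qpoch_inf (q^5) (q^5))) UNIV"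
    by (rule jtp[OF q5]) (use q lt3 in auto)
  moreover have "q^5 / q^3 = q^2" using q by (simp add: power_diff_conv_inverse eval_nat_numeral field_simps)
  ultimately show "infsum (cf q 0) UNIV = qpoch_inf (q^3) (q^5) * qpoch_inf (q^2) (q^5) * qpoch_inf (q^5) (q^5)"
    by (simp add: infsumI)
  have "cf q 2 = (\<lambda>k. (-1) powi k * (q ^ 5) powi trii k * q powi k)"
  proof
    fix k
    have "q powi (5 * trii k + 1 * k) = (q ^ 5) powi trii k * (q powi 1) powi k"
      by (rule powi_5t[OF q(2)])
    thus "cf q 2 k = (-1) powi k * (q ^ 5) powi trii k * q powi k"
      by (simp add: cf_def mult_ac)
  qed
  moreover have "((\<lambda>k. (-1) powi k * (q ^ 5) powi trii k * q powi k) has_sum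
      (qpoch_inf q (q^5) * qpoch_inf (q^5 / q) (q^5) * qpoch_inf (q^5) (q^5))) UNIV"
    by (rule jtp[OF q5]) (use q lt1 in auto)
  moreover have "q^5 / q = q^4" using q by (simp add: eval_nat_numeral field_simps)
  ultimately show "infsum (cf q 2) UNIV = qpoch_inf q (q^5) * qpoch_inf (q^4) (q^5) * qpoch_inf (q^5) (q^5)"
    by (simp add: infsumI)
qed

theorem rogers_ramanujan:
  assumes q: "norm q < 1" "q \<noteq> 0"
  shows "((\<lambda>j. q ^ (j^2) / qpoch q q j) has_sum (1 / (qpoch_inf q (q^5) * qpoch_inf (q^4) (q^5)))) UNIV"
    and "((\<lambda>j. q ^ (j^2) * q ^ j / qpoch q q j) has_sum (1 / (qpoch_inf (q^2) (q^5) * qpoch_inf (q^3) (q^5)))) UNIV"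
proof -
  have nz: "qpoch_inf (q ^ k) (q ^ 5) \<noteq> 0" if "k > 0" for k
  proof (rule qpoch_inf_nz')
    show "norm (q ^ 5) < 1" "norm (q ^ k) < 1" using q that by (simp_all add: norm_power power_less_one_iff)
  qed
  have n1: "qpoch_inf q (q ^ 5) \<noteq> 0" using nz[of 1] by simp
  have n2: "qpoch_inf (q^2) (q ^ 5) \<noteq> 0" "qpoch_inf (q^3) (q ^ 5) \<noteq> 0"
    "qpoch_inf (q^4) (q ^ 5) \<noteq> 0" "qpoch_inf (q^5) (q ^ 5) \<noteq> 0" using nz by auto
  show "((\<lambda>j. q ^ (j^2) / qpoch q q j) has_sum (1 / (qpoch_inf q (q^5) * qpoch_inf (q^4) (q^5)))) UNIV"
  proof -
    have "infsum (\<lambda>j. q ^ (j^2) / qpoch q q j) UNIV = 1 / (qpoch_inf q (q^5) * qpoch_inf (q^4) (q^5))"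
      unfolding RR_theta(1)[OF q] cf_jtp(1)[OF q] residue_split[OF q(1)]
      using n1 n2 by (simp add: field_simps)
    thus ?thesis using has_sum_infsum[OF RR_theta(3)[OF q]] by simp
  qed
  show "((\<lambda>j. q ^ (j^2) * q ^ j / qpoch q q j) has_sum (1 / (qpoch_inf (q^2) (q^5) * qpoch_inf (q^3) (q^5)))) UNIV"
  proof -
    have "infsum (\<lambda>j. q ^ (j^2) * q ^ j / qpoch q q j) UNIV = 1 / (qpoch_inf (q^2) (q^5) * qpoch_inf (q^3) (q^5))"
      unfolding RR_theta(2)[OF q] cf_jtp(2)[OF q] residue_split[OF q(1)]
      using n1 n2 by (simp add: field_simps)
    thus ?thesis using has_sum_infsum[OF RR_theta(4)[OF q]] by simp
  qed
qed

definition aa :: "complex \<Rightarrow> nat \<Rightarrow> complex" where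
  "aa q i = 1 / (qpoch q q i * qpoch (-q) q i)"

definition Bz :: "complex \<Rightarrow> int \<Rightarrow> complex" where
  "Bz q j = (if j < 0 then 0 else q ^ tri (nat j) / qpoch q q (nat j))"

definition cc :: "complex \<Rightarrow> nat \<Rightarrow> complex" where
  "cc q n = (\<Sum>i\<le>n. aa q i * Bz q (int n - 2 * int i))"

lemma qpoch_mq_nz: "norm q < 1 \<Longrightarrow> qpoch (-q) q n \<noteq> 0"
  by (rule qpoch_nz) auto

lemma aa_rec:
  assumes q: "norm q < 1"
  shows "aa q (Suc i) * (1 - q ^ (2 * Suc i)) = aa q i"
proof -
  have "qpoch q q (Suc i) * qpoch (-q) q (Suc i) = qpoch q q i * qpoch (-q) q i * (1 - q ^ (2 * Suc i))"
    by (simp add: qpoch_Suc power_mult_distrib power_mult[symmetric] algebra_simps power2_eq_square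
                  flip: power_add mult_2)
  moreover have "qpoch q q i \<noteq> 0" "qpoch (-q) q i \<noteq> 0" "qpoch q q (Suc i) \<noteq> 0" "qpoch (-q) q (Suc i) \<noteq> 0"
    using qpoch_qq_nz[OF q] qpoch_mq_nz[OF q] by auto
  ultimately show ?thesis by (simp add: aa_def field_simps)
qed

lemma Bz_rec:
  assumes q: "norm q < 1" "q \<noteq> 0"
  shows "Bz q j * (1 - q powi j) = q powi (j - 1) * Bz q (j - 1)"
proof (cases "j \<le> 0")
  case True
  then show ?thesis
    by (cases "j = 0") (auto simp: Bz_def)
next
  case False
  define m where "m = nat (j - 1)"
  have j: "j = int (Suc m)" using False by (simp add: m_def)
  have j1: "j - 1 = int m" using j by simp
  have nz: "qpoch q q m \<noteq> 0" "1 - q ^ Suc m \<noteq> 0" using qpoch_qq_nz[OF q(1), of m] qpoch_qq_nz[OF q(1), of "Suc m"]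
    by (auto simp: qpoch_qq_Suc)
  have "Bz q j * (1 - q powi j) = q ^ tri (Suc m) / qpoch q q (Suc m) * (1 - q ^ Suc m)"
    by (simp only: j Bz_def power_int_of_nat nat_int) simp
  also have "\<dots> = q ^ m * (q ^ tri m / qpoch q q m)"
    using nz by (simp add: qpoch_qq_Suc tri_Suc power_add field_simps)
  also have "\<dots> = q powi (j - 1) * Bz q (j - 1)"
    by (simp only: j1 Bz_def power_int_of_nat nat_int) simp
  finally show ?thesis .
qed

lemma cc_ext:
  assumes "n \<le> m"
  shows "cc q n = (\<Sum>i\<le>m. aa q i * Bz q (int n - 2 * int i))"
proof -
  have "(\<Sum>i\<le>m. aa q i * Bz q (int n - 2 * int i)) = (\<Sum>i\<le>n. aa q i * Bz q (int n - 2 * int i))"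
  proof (rule sum.mono_neutral_right)
    show "\<forall>i\<in>{..m} - {..n}. aa q i * Bz q (int n - 2 * int i) = 0"
      by (auto simp: Bz_def)
  qed (use assms in auto)
  thus ?thesis by (simp add: cc_def)
qed

lemma cc_rec:
  assumes q: "norm q < 1" "q \<noteq> 0"
  shows "(1 - q ^ Suc (Suc n)) * cc q (Suc (Suc n)) = cc q n + q ^ Suc n * cc q (Suc n)"
proof -
  define N where "N = Suc (Suc n)"
  define t where "t = (\<lambda>i. aa q i * Bz q (int N - 2 * int i))"
  have split: "(1 - q ^ N) * t i = t i * (1 - q ^ (2 * i)) + q ^ (2 * i) * (t i * (1 - q powi (int N - 2 * int i)))" for i
  proof -
    have "q ^ (2 * i) * q powi (int N - 2 * int i) = q powi (int (2 * i) + (int N - 2 * int i))"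
      by (rule pow_powi_combine[OF q(2)])
    also have "int (2 * i) + (int N - 2 * int i) = int N" by simp
    finally have "q ^ (2 * i) * q powi (int N - 2 * int i) = q ^ N" by simp
    thus ?thesis by (simp add: algebra_simps)
  qed
  have "(1 - q ^ N) * cc q N = (\<Sum>i\<le>N. t i * (1 - q ^ (2 * i))) + (\<Sum>i\<le>N. q ^ (2 * i) * (t i * (1 - q powi (int N - 2 * int i))))"
    unfolding cc_def t_def[symmetric] by (simp add: sum_distrib_left split sum.distrib)
  also have "(\<Sum>i\<le>N. t i * (1 - q ^ (2 * i))) = cc q n"
  proof -
    have "(\<Sum>i\<le>N. t i * (1 - q ^ (2 * i))) = t 0 * (1 - q ^ (2 * 0)) + (\<Sum>i\<le>Suc n. t (Suc i) * (1 - q ^ (2 * Suc i)))"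
      unfolding N_def by (rule sum.atMost_Suc_shift)
    also have "t 0 * (1 - q ^ (2 * 0)) = 0" by simp
    also have "(\<Sum>i\<le>Suc n. t (Suc i) * (1 - q ^ (2 * Suc i))) = (\<Sum>i\<le>Suc n. aa q i * Bz q (int n - 2 * int i))"
    proof (rule sum.cong)
      fix i assume "i \<in> {..Suc n}"
      have e: "int N - 2 * int (Suc i) = int n - 2 * int i" by (simp add: N_def)
      have "t (Suc i) = aa q (Suc i) * Bz q (int n - 2 * int i)" unfolding t_def by (simp only: e)
      hence "t (Suc i) * (1 - q ^ (2 * Suc i)) = (aa q (Suc i) * (1 - q ^ (2 * Suc i))) * Bz q (int n - 2 * int i)"
        by (simp only: mult_ac)
      thus "t (Suc i) * (1 - q ^ (2 * Suc i)) = aa q i * Bz q (int n - 2 * int i)"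
        using aa_rec[OF q(1), of i] by (simp only:)
    qed simp
    also have "\<dots> = cc q n" by (rule cc_ext[symmetric]) simp
    finally show ?thesis by simp
  qed
  also have "(\<Sum>i\<le>N. q ^ (2 * i) * (t i * (1 - q powi (int N - 2 * int i)))) = q ^ Suc n * cc q (Suc n)"
  proof -
    have "(\<Sum>i\<le>N. q ^ (2 * i) * (t i * (1 - q powi (int N - 2 * int i))))
          = (\<Sum>i\<le>N. q ^ Suc n * (aa q i * Bz q (int (Suc n) - 2 * int i)))"
    proof (rule sum.cong)
      fix i assume "i \<in> {..N}"
      have r: "Bz q (int N - 2 * int i) * (1 - q powi (int N - 2 * int i))
             = q powi (int N - 2 * int i - 1) * Bz q (int N - 2 * int i - 1)"
        by (rule Bz_rec[OF q])
      have e: "int N - 2 * int i - 1 = int (Suc n) - 2 * int i" by (simp add: N_def)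
      have p: "q ^ (2 * i) * q powi (int (Suc n) - 2 * int i) = q ^ Suc n"
      proof -
        have "q ^ (2 * i) * q powi (int (Suc n) - 2 * int i) = q powi (int (2 * i) + (int (Suc n) - 2 * int i))"
          by (rule pow_powi_combine[OF q(2)])
        also have "int (2 * i) + (int (Suc n) - 2 * int i) = int (Suc n)" by simp
        finally show ?thesis by (simp only: power_int_of_nat)
      qed
      from r have r': "Bz q (int N - 2 * int i) * (1 - q powi (int N - 2 * int i))
             = q powi (int (Suc n) - 2 * int i) * Bz q (int (Suc n) - 2 * int i)"
        by (simp only: e)
      have "q ^ (2 * i) * (t i * (1 - q powi (int N - 2 * int i)))
            = q ^ (2 * i) * (aa q i * (Bz q (int N - 2 * int i) * (1 - q powi (int N - 2 * int i))))"
        by (simp only: t_def mult.assoc)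
      also have "\<dots> = q ^ (2 * i) * (aa q i * (q powi (int (Suc n) - 2 * int i) * Bz q (int (Suc n) - 2 * int i)))"
        by (simp only: r')
      also have "\<dots> = aa q i * (q ^ (2 * i) * q powi (int (Suc n) - 2 * int i)) * Bz q (int (Suc n) - 2 * int i)"
        by (simp only: mult_ac)
      finally have "q ^ (2 * i) * (t i * (1 - q powi (int N - 2 * int i)))
            = aa q i * (q ^ (2 * i) * q powi (int (Suc n) - 2 * int i)) * Bz q (int (Suc n) - 2 * int i)" .
      also have "\<dots> = q ^ Suc n * (aa q i * Bz q (int (Suc n) - 2 * int i))"
        by (simp only: p) (simp add: mult_ac)
      finally show "q ^ (2 * i) * (t i * (1 - q powi (int N - 2 * int i)))
            = q ^ Suc n * (aa q i * Bz q (int (Suc n) - 2 * int i))" .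
    qed simp
    also have "\<dots> = q ^ Suc n * (\<Sum>i\<le>N. aa q i * Bz q (int (Suc n) - 2 * int i))"
      by (simp add: sum_distrib_left)
    also have "(\<Sum>i\<le>N. aa q i * Bz q (int (Suc n) - 2 * int i)) = cc q (Suc n)"
      by (rule cc_ext[symmetric]) (simp add: N_def)
    finally show ?thesis .
  qed
  finally show ?thesis by (simp add: N_def)
qed

lemma cc_closed:
  assumes q: "norm q < 1" "q \<noteq> 0"
  shows "cc q n = 1 / qpoch q q n"
proof -
  have c0: "cc q 0 = 1" by (simp add: cc_def aa_def Bz_def)
  have c1: "cc q (Suc 0) = 1 / (1 - q)" by (simp add: cc_def aa_def Bz_def tri_Suc qpoch_qq_Suc)
  have "(1 - q ^ Suc n) * cc q (Suc n) = cc q n" for n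
  proof (induction n)
    case 0
    have "1 - q \<noteq> 0" using q by auto
    thus ?case using c0 c1 by simp
  next
    case (Suc n)
    have "(1 - q ^ Suc (Suc n)) * cc q (Suc (Suc n)) = cc q n + q ^ Suc n * cc q (Suc n)"
      by (rule cc_rec[OF q])
    also have "\<dots> = cc q (Suc n)" using Suc by (simp add: algebra_simps)
    finally show ?case .
  qed
  hence rec: "cc q (Suc n) = cc q n / (1 - q ^ Suc n)" for n
  proof -
    have "1 - q ^ Suc n \<noteq> 0" using qpoch_qq_nz[OF q(1), of "Suc n"] by (auto simp: qpoch_qq_Suc)
    thus ?thesis using \<open>\<And>n. (1 - q ^ Suc n) * cc q (Suc n) = cc q n\<close>[of n] by (simp add: field_simps)
  qed
  show ?thesis
  proof (induction n)
    case 0 then show ?case by (simp add: c0)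
  next
    case (Suc n)
    then show ?case by (simp add: rec qpoch_qq_Suc)
  qed
qed

lemma sq_tri_k: "k^2 + k = 2 * (tri k + k)"
proof (induction k)
  case 0 then show ?case by simp
next
  case (Suc k)
  have "(Suc k)^2 = k^2 + 2 * k + 1" by (simp add: power2_eq_square)
  thus ?case using Suc by (simp add: tri_Suc)
qed

lemma sq_tri_j0: "3 * j^2 = 2 * (j^2 + tri j) + j"
proof (induction j)
  case 0 then show ?case by simp
next
  case (Suc j)
  have e: "(Suc j)^2 = j^2 + 2 * j + 1" by (simp add: power2_eq_square)
  show ?case unfolding e tri_Suc using Suc.IH by (simp add: distrib_left)
qed

lemma sq_tri_j1: "3 * j^2 - j = 2 * (j^2 + tri j)"
  using sq_tri_j0[of j] by simp

lemma sq_tri_j2: "3 * j^2 + j = 2 * (j^2 + j + tri j)"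
  using sq_tri_j0[of j] by simp

lemma Bz_nat: "Bz q (int m) = q ^ tri m / qpoch q q m"
  by (simp add: Bz_def)

lemma cc_alt:
  "cc q n = (\<Sum>i\<le>n div 2. aa q i * (q ^ tri (n - 2 * i) / qpoch q q (n - 2 * i)))"
proof -
  have "cc q n = (\<Sum>i\<le>n div 2. aa q i * Bz q (int n - 2 * int i))"
    unfolding cc_def
  proof (rule sum.mono_neutral_right)
    show "\<forall>i\<in>{..n} - {..n div 2}. aa q i * Bz q (int n - 2 * int i) = 0"
    proof
      fix i assume "i \<in> {..n} - {..n div 2}"
      hence "n div 2 < i" by simp
      hence "n < i * 2" using div_less_iff_less_mult[of 2 n i] by simp
      hence "int n - 2 * int i < 0" by linarith
      thus "aa q i * Bz q (int n - 2 * int i) = 0" by (simp add: Bz_def)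
    qed
  qed auto
  also have "\<dots> = (\<Sum>i\<le>n div 2. aa q i * (q ^ tri (n - 2 * i) / qpoch q q (n - 2 * i)))"
  proof (rule sum.cong)
    fix i assume "i \<in> {..n div 2}"
    hence "\<not> n div 2 < i" by simp
    hence "\<not> n < i * 2" using div_less_iff_less_mult[of 2 n i] by simp
    hence "2 * i \<le> n" by linarith
    hence e: "int n - 2 * int i = int (n - 2 * i)" by simp
    show "aa q i * Bz q (int n - 2 * int i) = aa q i * (q ^ tri (n - 2 * i) / qpoch q q (n - 2 * i))"
      by (simp only: e Bz_nat)
  qed simp
  finally show ?thesis .
qed

lemma triple_sum:
  fixes q :: complex and s :: nat and E :: "nat \<Rightarrow> nat \<Rightarrow> nat" and R :: complex
  assumes q: "norm q < 1" "q \<noteq> 0"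
    and E: "\<And>i j. E i j = (2 * i + j)^2 + s * (2 * i + j) + tri j"
    and RR: "((\<lambda>n. q ^ (n^2) * q ^ (s * n) / qpoch q q n) has_sum R) UNIV"
  shows "((\<lambda>(i, j, k). q ^ (E i j + i * k + (k^2 + k) div 2) / (qpoch q q i * qpoch q q j * qpoch q q k))
           has_sum (qpoch_inf (-q) q * R)) UNIV"
proof -
  define f where "f = (\<lambda>(i, j, k). q ^ (E i j + i * k + (k^2 + k) div 2) / (qpoch q q i * qpoch q q j * qpoch q q k))"
  let ?r = "norm q"
  define K where "K = 1 / Lr ?r"
  have K0: "0 \<le> K" using Lr_facts[of ?r] q by (simp add: K_def)
  have Kb: "norm (1 / qpoch q q n) \<le> K" for n unfolding K_def by (rule norm_inv_qpoch_le[OF q(1)])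
  define g1 where "g1 = (\<lambda>i::nat. complex_of_real (K * ?r ^ i))"
  have g1norm: "norm (g1 i) = K * ?r ^ i" for i
    by (simp only: g1_def norm_of_real) (simp add: K0)
  have g1n: "(\<lambda>i. norm (g1 i)) summable_on UNIV"
  proof -
    have "summable (\<lambda>i. K * ?r ^ i)" by (rule summable_mult, rule summable_geometric) (use q in simp)
    hence "(\<lambda>i. K * ?r ^ i) summable_on UNIV" by (rule summable_on_nat_nonneg) (use K0 in simp)
    moreover have "norm (g1 i) = K * ?r ^ i" for i
      by (simp only: g1_def norm_of_real) (simp add: K0)
    ultimately show ?thesis by simp
  qed
  have g2: "(\<lambda>(j, k). g1 j * g1 k) summable_on (UNIV \<times> UNIV)"
    by (rule prod_summable[OF g1n g1n])
  have g2n: "(\<lambda>x. norm ((\<lambda>(j, k). g1 j * g1 k) x)) summable_on (UNIV \<times> UNIV)"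
    using g2 summable_on_iff_abs_summable_on_complex by blast
  have g3: "(\<lambda>(i, jk). g1 i * (\<lambda>(j, k). g1 j * g1 k) jk) summable_on (UNIV \<times> (UNIV \<times> UNIV))"
    by (rule prod_summable[OF g1n g2n])
  hence g3': "(\<lambda>(i, jk). g1 i * (\<lambda>(j, k). g1 j * g1 k) jk) summable_on UNIV" by simp
  hence g3n: "(\<lambda>x. norm ((\<lambda>(i, jk). g1 i * (\<lambda>(j, k). g1 j * g1 k) jk) x)) summable_on UNIV"
    using summable_on_iff_abs_summable_on_complex by blast
  have fbound: "norm (f (i, j, k)) \<le> norm (g1 i * (g1 j * g1 k))" for i j k
  proof -
    define e where "e = E i j + i * k + (k^2 + k) div 2"
    have e_ge: "i + j + k \<le> e"
    proof -
      have "2 * i + j \<le> (2 * i + j)^2" using le_square[of "2 * i + j"] by (simp add: power2_eq_square)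
      hence "i + j \<le> E i j" using E[of i j] by simp
      moreover have "k \<le> (k^2 + k) div 2"
      proof -
        have "2 * k \<le> k^2 + k" using le_square[of k] by (simp add: power2_eq_square)
        hence "(2 * k) div 2 \<le> (k^2 + k) div 2" by (rule div_le_mono)
        thus ?thesis by simp
      qed
      ultimately show ?thesis unfolding e_def by linarith
    qed
    have "norm (f (i, j, k)) = ?r ^ e * (norm (1 / qpoch q q i) * norm (1 / qpoch q q j) * norm (1 / qpoch q q k))"
      by (simp add: f_def e_def norm_divide norm_mult norm_power)
    also have "\<dots> \<le> ?r ^ (i + j + k) * (K * K * K)"
    proof (rule mult_mono)
      show "?r ^ e \<le> ?r ^ (i + j + k)" using q e_ge by (intro power_decreasing) auto
      show "norm (1 / qpoch q q i) * norm (1 / qpoch q q j) * norm (1 / qpoch q q k) \<le> K * K * K"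
        by (intro mult_mono Kb) (auto simp: K0)
    qed (use K0 in auto)
    also have "\<dots> = norm (g1 i * (g1 j * g1 k))"
      by (simp only: norm_mult g1norm) (simp add: power_add mult_ac)
    finally show ?thesis .
  qed
  have fs: "f summable_on UNIV"
  proof -
    have "(\<lambda>x. norm (f x)) summable_on UNIV"
    proof (rule summable_on_comparison_test[OF g3n])
      fix x :: "nat \<times> nat \<times> nat"
      obtain i j k where x: "x = (i, j, k)" by (cases x) auto
      show "norm (f x) \<le> norm ((\<lambda>(i, jk). g1 i * (\<lambda>(j, k). g1 j * g1 k) jk) x)"
        using fbound[of i j k] by (simp add: x)
    qed simp
    thus ?thesis by (rule abs_summable_summable)
  qed
  define f' where "f' = (\<lambda>((i::nat, j::nat), k::nat). f (i, j, k))"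
  have reidx: "(f' has_sum S) UNIV = (f has_sum S) UNIV" for S
    by (rule has_sum_reindex_bij_witness[where j = "\<lambda>((i, j), k). (i, j, k)" and i = "\<lambda>(i, j, k). ((i, j), k)"])
       (auto simp: f'_def)
  have f's: "f' summable_on UNIV"
    using fs reidx unfolding summable_on_def by blast
  define G where "G = (\<lambda>(i::nat, j::nat). q ^ E i j / (qpoch q q i * qpoch q q j) * qpoch_inf (- (q * q ^ i)) q)"
  have inner: "((\<lambda>k. f' ((i, j), k)) has_sum G (i, j)) UNIV" for i j
  proof -
    define C where "C = q ^ E i j / (qpoch q q i * qpoch q q j)"
    have "((\<lambda>k. C * (q ^ tri k * (q * q ^ i) ^ k / qpoch q q k)) has_sum C * qpoch_inf (- (q * q ^ i)) q) UNIV"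
      by (rule has_sum_cmult_right[OF euler2[OF q(1)]])
    moreover have "f' ((i, j), k) = C * (q ^ tri k * (q * q ^ i) ^ k / qpoch q q k)" for k
    proof -
      have "(k^2 + k) div 2 = tri k + k" using sq_tri_k[of k] by simp
      hence "q ^ (E i j + i * k + (k^2 + k) div 2) = q ^ E i j * (q ^ tri k * (q * q ^ i) ^ k)"
        by (simp add: power_add power_mult_distrib power_mult[symmetric] mult_ac)
      thus ?thesis by (simp add: f'_def f_def C_def)
    qed
    ultimately show ?thesis by (simp add: G_def C_def)
  qed
  have Gs: "G summable_on UNIV"
  proof -
    have "(\<lambda>x. infsum (\<lambda>y. f' (x, y)) UNIV) summable_on UNIV"
      by (rule summable_on_SigmaD[where B = "\<lambda>_. UNIV"]) (use f's inner in \<open>auto intro: has_sum_imp_summable\<close>)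
    moreover have "infsum (\<lambda>y. f' (x, y)) UNIV = G x" for x
      using inner[of "fst x" "snd x"] by (simp add: infsumI)
    ultimately show ?thesis by simp
  qed
  define P where "P = qpoch_inf (-q) q"
  define Sg2 where "Sg2 = Sigma (UNIV :: nat set) (\<lambda>n. {..n div 2})"
  define G' where "G' = (\<lambda>(n::nat, i::nat). G (i, n - 2 * i))"
  have reidx2: "(G' has_sum S) Sg2 = (G has_sum S) UNIV" for S
    unfolding Sg2_def
    by (rule has_sum_reindex_bij_witness[where j = "\<lambda>(n, i). (i, n - 2 * i)" and i = "\<lambda>(i, j). (2 * i + j, i)"])
       (auto simp: G'_def)
  have G's: "G' summable_on Sg2"
    using Gs reidx2 unfolding summable_on_def by blast
  have inner2: "((\<lambda>i. G' (n, i)) has_sum (P * (q ^ (n^2) * q ^ (s * n) / qpoch q q n))) {..n div 2}" for n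
  proof -
    have "(\<Sum>i\<le>n div 2. G' (n, i)) = P * q ^ (n^2) * q ^ (s * n) * cc q n"
    proof -
      have "(\<Sum>i\<le>n div 2. G' (n, i)) = (\<Sum>i\<le>n div 2. P * q ^ (n^2) * q ^ (s * n) * (aa q i * (q ^ tri (n - 2 * i) / qpoch q q (n - 2 * i))))"
      proof (rule sum.cong)
        fix i assume "i \<in> {..n div 2}"
        hence i: "2 * i \<le> n" by auto
        have E': "E i (n - 2 * i) = n^2 + s * n + tri (n - 2 * i)" using E[of i "n - 2 * i"] i by simp
        have split: "P = qpoch (-q) q i * qpoch_inf (- (q * q ^ i)) q"
          unfolding P_def using qpoch_inf_split[OF q(1), of "-q" i] by simp
        have nz: "qpoch (-q) q i \<noteq> 0" "qpoch q q i \<noteq> 0" "qpoch q q (n - 2 * i) \<noteq> 0"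
          using qpoch_mq_nz[OF q(1)] qpoch_qq_nz[OF q(1)] by auto
        show "G' (n, i) = P * q ^ (n^2) * q ^ (s * n) * (aa q i * (q ^ tri (n - 2 * i) / qpoch q q (n - 2 * i)))"
          unfolding G'_def G_def split aa_def case_prod_conv E' using nz
          by (simp add: power_add field_simps)
      qed simp
      also have "\<dots> = P * q ^ (n^2) * q ^ (s * n) * cc q n"
        by (simp add: cc_alt sum_distrib_left)
      finally show ?thesis .
    qed
    also have "\<dots> = P * (q ^ (n^2) * q ^ (s * n) / qpoch q q n)"
      by (simp add: cc_closed[OF q])
    finally show ?thesis by (intro has_sum_finiteI) auto
  qed
  have G'h: "(G' has_sum (P * R)) Sg2"
    unfolding Sg2_def
    by (rule has_sum_SigmaI[OF inner2 has_sum_cmult_right[OF RR]]) (use G's in \<open>simp add: Sg2_def\<close>)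
  have Gh: "(G has_sum (P * R)) UNIV" using G'h reidx2 by simp
  have inner': "((\<lambda>k. f' (x, k)) has_sum G x) UNIV" for x
    using inner[of "fst x" "snd x"] by simp
  have "(f' has_sum (P * R)) (Sigma UNIV (\<lambda>_. UNIV))"
    by (rule has_sum_SigmaI[OF inner' Gh]) (use f's in simp)
  hence "(f' has_sum (P * R)) UNIV" by simp
  hence "(f has_sum (P * R)) UNIV" using reidx by simp
  thus ?thesis by (simp add: f_def P_def)
qed

lemma sq2ij: "(2 * i + j)^2 = 4 * i^2 + 4 * i * j + (j::nat)^2"
  by (simp add: power2_eq_square algebra_simps)

lemma exp1: "4 * i\<^sup>2 + 4 * i * j + i * k + (3 * j\<^sup>2 - j) div 2 + (k\<^sup>2 + k) div 2
   = ((2 * i + j)^2 + 0 * (2 * i + j) + tri j) + i * k + (k^2 + k) div 2"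
proof -
  have "(3 * j\<^sup>2 - j) div 2 = j^2 + tri j" by (simp only: sq_tri_j1) simp
  thus ?thesis by (simp add: sq2ij)
qed

lemma exp2: "4 * i\<^sup>2 + 4 * i * j + i * k + 2 * i + (3 * j\<^sup>2 + j) div 2 + (k\<^sup>2 + k) div 2
   = ((2 * i + j)^2 + 1 * (2 * i + j) + tri j) + i * k + (k^2 + k) div 2"
proof -
  have "(3 * j\<^sup>2 + j) div 2 = j^2 + j + tri j" by (simp only: sq_tri_j2) simp
  thus ?thesis by (simp add: sq2ij)
qed

lemma qpoch_00 [simp]: "qpoch 0 0 n = 1"
  by (simp add: qpoch_def)

theorem theorem4p14:
  fixes q :: complex
  assumes "norm q < 1"
  shows "(((\<lambda>(i, j, k). q ^ (4 * i\<^sup>2 + 4 * i * j + i * k + (3 * j\<^sup>2 - j) div 2 + (k\<^sup>2 + k) div 2)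
            / (qpoch q q i * qpoch q q j * qpoch q q k))
          has_sum (qpoch_inf (- q) q / (qpoch_inf q (q ^ 5) * qpoch_inf (q ^ 4) (q ^ 5))))
         (UNIV :: (nat \<times> nat \<times> nat) set)) \<and>
         ((\<lambda>(i, j, k). q ^ (4 * i\<^sup>2 + 4 * i * j + i * k + 2 * i + (3 * j\<^sup>2 + j) div 2 + (k\<^sup>2 + k) div 2)
            / (qpoch q q i * qpoch q q j * qpoch q q k))
          has_sum (qpoch_inf (- q) q / (qpoch_inf (q ^ 2) (q ^ 5) * qpoch_inf (q ^ 3) (q ^ 5))))
         (UNIV :: (nat \<times> nat \<times> nat) set)"
proof (cases "q = 0")
  case True
  have e1: "(4 * i\<^sup>2 + 4 * i * j + i * k + (3 * j\<^sup>2 - j) div 2 + (k\<^sup>2 + k) div 2 = 0) \<longleftrightarrow> (i = 0 \<and> j = 0 \<and> k = 0)"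
    for i j k :: nat
    unfolding exp1 using sq_tri_k[of k] by (auto simp: power2_eq_square)
  have e2: "(4 * i\<^sup>2 + 4 * i * j + i * k + 2 * i + (3 * j\<^sup>2 + j) div 2 + (k\<^sup>2 + k) div 2 = 0) \<longleftrightarrow> (i = 0 \<and> j = 0 \<and> k = 0)"
    for i j k :: nat
    unfolding exp2 using sq_tri_k[of k] by (auto simp: power2_eq_square)
  have R1: "qpoch_inf (- q) q / (qpoch_inf q (q ^ 5) * qpoch_inf (q ^ 4) (q ^ 5)) = 1"
    using True by (simp add: qpoch_inf_def)
  have R2: "qpoch_inf (- q) q / (qpoch_inf (q ^ 2) (q ^ 5) * qpoch_inf (q ^ 3) (q ^ 5)) = 1"
    using True by (simp add: qpoch_inf_def)
  show ?thesis
    unfolding R1 R2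
  proof (intro conjI)
    show "((\<lambda>(i, j, k). q ^ (4 * i\<^sup>2 + 4 * i * j + i * k + (3 * j\<^sup>2 - j) div 2 + (k\<^sup>2 + k) div 2)
            / (qpoch q q i * qpoch q q j * qpoch q q k)) has_sum 1) UNIV"
      by (rule has_sum_finite_neutralI[of "{(0, 0, 0)}"]) (use True e1 in auto)
    show "((\<lambda>(i, j, k). q ^ (4 * i\<^sup>2 + 4 * i * j + i * k + 2 * i + (3 * j\<^sup>2 + j) div 2 + (k\<^sup>2 + k) div 2)
            / (qpoch q q i * qpoch q q j * qpoch q q k)) has_sum 1) UNIV"
      by (rule has_sum_finite_neutralI[of "{(0, 0, 0)}"]) (use True e2 in auto)
  qed
next
  case False
  have q: "norm q < 1" "q \<noteq> 0" using assms False by auto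
  have RR1: "((\<lambda>n. q ^ (n^2) * q ^ (0 * n) / qpoch q q n) has_sum (1 / (qpoch_inf q (q^5) * qpoch_inf (q^4) (q^5)))) UNIV"
    using rogers_ramanujan(1)[OF q] by simp
  have RR2: "((\<lambda>n. q ^ (n^2) * q ^ (1 * n) / qpoch q q n) has_sum (1 / (qpoch_inf (q^2) (q^5) * qpoch_inf (q^3) (q^5)))) UNIV"
    using rogers_ramanujan(2)[OF q] by simp
  note T1 = triple_sum[OF q _ RR1, where E = "\<lambda>i j. (2 * i + j)^2 + 0 * (2 * i + j) + tri j"]
  note T2 = triple_sum[OF q _ RR2, where E = "\<lambda>i j. (2 * i + j)^2 + 1 * (2 * i + j) + tri j"]
  show ?thesis
    unfolding exp1 exp2 using T1 T2 by (simp add: divide_inverse)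
qed

end
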